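(* The $R$-algebra $\mathcal H_{n,r}$ is isomorphic to the $R$-algebra with generators $g_1,\ldots,g_{n-1}$ and $b_{\mathbf k}$ for $\mathbf k\in[1,r]^n$, subject to the defining relations (1) $g_ig_j=g_jg_i$ for $|i-j|>1$; (2) $g_ig_{i+1}g_i=g_{i+1}g_ig_{i+1}$ for $1\le i\le n-2$; (3) $g_i^2=1+(q-q^{-1})e_ig_i$ for $1\le i\le n-1$, where $e_i:=\sum_{\mathbf k,\ k_i=k_{i+1}}b_{\mathbf k}$; (4) $b_{\mathbf k}b_{\mathbf k'}=\delta_{\mathbf k,\mathbf k'}b_{\mathbf k}$ for all $\mathbf k,\mathbf k'\in[1,r]^n$; (5) $g_ib_{\mathbf k}=b_{s_i.\mathbf k}g_i$ for $1\le i\le n-1$, $\mathbf k\in[1,r]^n$; (6) $\sum_{\mathbf k\in[1,r]^n}b_{\mathbf k}=1$. The isomorphism sends $g_i\mapsto T_i+B'_{i,i+1}$ and $b_{\mathbf k}\mapsto \prod_{i=1}^n\prod_{1\le j\le r,\,j\ne k_i}\frac{t_i-u_j}{u_{k_i}-u_j}$. (In particular, this presentation does not involve $u_1,\ldots,u_r$.)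
   Context: Standing setup: $R$ is an integral domain, $n\ge 1$, $r\ge 1$, and $q,u_1,\ldots,u_r\in R$ with $q$ invertible in $R$ and $\Delta:=\prod_{1\le j<i\le r}(u_i-u_j)$ invertible in $R$. For $1\le c\le r$ let $F_c(X)\in R[X]$ be the unique polynomial of degree $\le r-1$ with $F_c(u_{c'})=\delta_{c,c'}\Delta$ for all $1\le c'\le r$. The modified Ariki–Koike (Shoji) algebra $\mathcal H_{n,r}=\mathcal H_{n,r}(R,q,u_1,\ldots,u_r)$ is the associative $R$-algebra generated by $t_1,\ldots,t_n,T_1,\ldots,T_{n-1}$ subject to: $(T_i-q)(T_i+q^{-1})=0$; $(t_i-u_1)\cdots(t_i-u_r)=0$; $T_iT_{i+1}T_i=T_{i+1}T_iT_{i+1}$; $T_iT_j=T_jT_i$ for $|i-j|\ge2$; $t_it_j=t_jt_i$; $T_jt_k=t_kT_j$ for $k\ne j,j+1$; and for $2\le j\le n$: $T_{j-1}t_j=t_{j-1}T_{j-1}+\Delta^{-2}\sum_{1\le c_1<c_2\le r}(u_{c_2}-u_{c_1})(q-q^{-1})F_{c_1}(t_{j-1})F_{c_2}(t_j)$ and $T_{j-1}t_{j-1}=t_jT_{j-1}-\Delta^{-2}\sum_{1\le c_1<c_2\le r}(u_{c_2}-u_{c_1})(q-q^{-1})F_{c_1}(t_{j-1})F_{c_2}(t_j)$. Write $[1,r]=\{1,\ldots,r\}$; in $\mathcal H_{n,r}$, $B'_{i,j}:=-(q-q^{-1})\sum_{\mathbf k,\ k_i<k_j}\prod_{l=1}^n\prod_{m\ne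 k_l}\frac{t_l-u_m}{u_{k_l}-u_m}$. For $\mathbf k\in[1,r]^n$ and $1\le i\le n-1$, $s_i.\mathbf k$ denotes $\mathbf k$ with entries $i$ and $i+1$ swapped. *)

theory Defs
  imports "HOL-Computational_Algebra.Polynomial" "HOL-Library.FuncSet"
begin

definition rinv :: "'a::comm_ring_1 \<Rightarrow> 'a" where
  "rinv x = (SOME y. x * y = 1)"

text \<open>An R-algebra structure on a (possibly noncommutative) ring 'b:
  a unital ring homomorphism from R into the centre of 'b.\<close>
definition R_algebra :: "('a::comm_ring_1 \<Rightarrow> 'b::ring_1) \<Rightarrow> bool" where
  "R_algebra \<iota> \<longleftrightarrow> \<iota> 1 = 1 \<and> (\<forall>x y. \<iota> (x + y) = \<iota> x + \<iota> y)
     \<and> (\<forall>x y. \<iota> (x * y) = \<iota> x * \<iota> y) \<and> (\<forall>x z. \<iota> x * z = z * \<iota> x)"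

definition Vdelta :: "nat \<Rightarrow> (nat \<Rightarrow> 'a::comm_ring_1) \<Rightarrow> 'a" where
  "Vdelta r u = (\<Prod>(i,j)\<in>{(i,j). 1 \<le> j \<and> j < i \<and> i \<le> r}. u i - u j)"

definition Fpol :: "nat \<Rightarrow> (nat \<Rightarrow> 'a::comm_ring_1) \<Rightarrow> nat \<Rightarrow> 'a poly" where
  "Fpol r u c = (THE p. degree p \<le> r - 1 \<and>
      (\<forall>c'\<in>{1..r}. poly p (u c') = (if c = c' then Vdelta r u else 0)))"

definition polyA :: "('a::comm_ring_1 \<Rightarrow> 'b::ring_1) \<Rightarrow> 'a poly \<Rightarrow> 'b \<Rightarrow> 'b" where
  "polyA \<iota> p x = (\<Sum>i\<le>degree p. \<iota> (coeff p i) * x ^ i)"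

definition Kset :: "nat \<Rightarrow> nat \<Rightarrow> (nat \<Rightarrow> nat) set" where
  "Kset n r = PiE {1..n} (\<lambda>_. {1..r})"

definition sact :: "nat \<Rightarrow> (nat \<Rightarrow> nat) \<Rightarrow> (nat \<Rightarrow> nat)" where
  "sact i k = (\<lambda>j. if j = i then k (i+1) else if j = i+1 then k i else k j)"

definition bprod :: "('a::comm_ring_1 \<Rightarrow> 'b::ring_1) \<Rightarrow> nat \<Rightarrow> nat \<Rightarrow> (nat \<Rightarrow> 'a)
    \<Rightarrow> (nat \<Rightarrow> 'b) \<Rightarrow> (nat \<Rightarrow> nat) \<Rightarrow> 'b" where
  "bprod \<iota> n r u t k = prod_list (map (\<lambda>l. prod_list (map (\<lambda>m. (t l - \<iota> (u m)) * \<iota> (rinv (u (k l) - u m)))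
        (filter (\<lambda>m. m \<noteq> k l) [1..<r+1]))) [1..<n+1])"

definition Bprime :: "('a::comm_ring_1 \<Rightarrow> 'b::ring_1) \<Rightarrow> nat \<Rightarrow> nat \<Rightarrow> 'a \<Rightarrow> (nat \<Rightarrow> 'a)
    \<Rightarrow> (nat \<Rightarrow> 'b) \<Rightarrow> nat \<Rightarrow> nat \<Rightarrow> 'b" where
  "Bprime \<iota> n r q u t i j = - (\<iota> (q - rinv q)) *
      (\<Sum>k\<in>{k\<in>Kset n r. k i < k j}. bprod \<iota> n r u t k)"

definition Hcorr :: "('a::comm_ring_1 \<Rightarrow> 'b::ring_1) \<Rightarrow> nat \<Rightarrow> 'a \<Rightarrow> (nat \<Rightarrow> 'a)
    \<Rightarrow> (nat \<Rightarrow> 'b) \<Rightarrow> nat \<Rightarrow> 'b" where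
  "Hcorr \<iota> r q u t j = \<iota> (rinv (Vdelta r u ^ 2)) *
     (\<Sum>(c1,c2)\<in>{(c1,c2). 1 \<le> c1 \<and> c1 < c2 \<and> c2 \<le> r}.
        \<iota> ((u c2 - u c1) * (q - rinv q)) * polyA \<iota> (Fpol r u c1) (t (j-1)) * polyA \<iota> (Fpol r u c2) (t j))"

definition H_rels :: "('a::comm_ring_1 \<Rightarrow> 'b::ring_1) \<Rightarrow> nat \<Rightarrow> nat \<Rightarrow> 'a \<Rightarrow> (nat \<Rightarrow> 'a)
    \<Rightarrow> (nat \<Rightarrow> 'b) \<Rightarrow> (nat \<Rightarrow> 'b) \<Rightarrow> bool" where
  "H_rels \<iota> n r q u t T \<longleftrightarrow>
     (\<forall>i\<in>{1..n-1}. (T i - \<iota> q) * (T i + \<iota> (rinv q)) = 0)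
   \<and> (\<forall>i\<in>{1..n}. prod_list (map (\<lambda>c. t i - \<iota> (u c)) [1..<r+1]) = 0)
   \<and> (\<forall>i\<in>{1..n-2}. T i * T (i+1) * T i = T (i+1) * T i * T (i+1))
   \<and> (\<forall>i\<in>{1..n-1}. \<forall>j\<in>{1..n-1}. (i + 2 \<le> j \<or> j + 2 \<le> i) \<longrightarrow> T i * T j = T j * T i)
   \<and> (\<forall>i\<in>{1..n}. \<forall>j\<in>{1..n}. t i * t j = t j * t i)
   \<and> (\<forall>j\<in>{1..n-1}. \<forall>k\<in>{1..n}. k \<noteq> j \<and> k \<noteq> j+1 \<longrightarrow> T j * t k = t k * T j)
   \<and> (\<forall>j\<in>{2..n}. T (j-1) * t j = t (j-1) * T (j-1) + Hcorr \<iota> r q u t j)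
   \<and> (\<forall>j\<in>{2..n}. T (j-1) * t (j-1) = t j * T (j-1) - Hcorr \<iota> r q u t j)"

text \<open>Homomorphisms H_{n,r} -> A, i.e. solutions of the relations, normalised to 0 outside the index ranges.\<close>
definition H_sols :: "('a::comm_ring_1 \<Rightarrow> 'b::ring_1) \<Rightarrow> nat \<Rightarrow> nat \<Rightarrow> 'a \<Rightarrow> (nat \<Rightarrow> 'a)
    \<Rightarrow> ((nat \<Rightarrow> 'b) \<times> (nat \<Rightarrow> 'b)) set" where
  "H_sols \<iota> n r q u = {(t, T). H_rels \<iota> n r q u t T
      \<and> (\<forall>i. i \<notin> {1..n} \<longrightarrow> t i = 0) \<and> (\<forall>i. i \<notin> {1..n-1} \<longrightarrow> T i = 0)}"

definition e_idem :: "nat \<Rightarrow> nat \<Rightarrow> ((nat \<Rightarrow> nat) \<Rightarrow> 'b::ring_1) \<Rightarrow> nat \<Rightarrow> 'b" where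
  "e_idem n r b i = (\<Sum>k\<in>{k\<in>Kset n r. k i = k (i+1)}. b k)"

definition G_rels :: "('a::comm_ring_1 \<Rightarrow> 'b::ring_1) \<Rightarrow> nat \<Rightarrow> nat \<Rightarrow> 'a
    \<Rightarrow> (nat \<Rightarrow> 'b) \<Rightarrow> ((nat \<Rightarrow> nat) \<Rightarrow> 'b) \<Rightarrow> bool" where
  "G_rels \<iota> n r q g b \<longleftrightarrow>
     (\<forall>i\<in>{1..n-1}. \<forall>j\<in>{1..n-1}. (i + 2 \<le> j \<or> j + 2 \<le> i) \<longrightarrow> g i * g j = g j * g i)
   \<and> (\<forall>i\<in>{1..n-2}. g i * g (i+1) * g i = g (i+1) * g i * g (i+1))
   \<and> (\<forall>i\<in>{1..n-1}. g i ^ 2 = 1 + \<iota> (q - rinv q) * e_idem n r b i * g i)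
   \<and> (\<forall>k\<in>Kset n r. \<forall>k'\<in>Kset n r. b k * b k' = (if k = k' then b k else 0))
   \<and> (\<forall>i\<in>{1..n-1}. \<forall>k\<in>Kset n r. g i * b k = b (sact i k) * g i)
   \<and> (\<Sum>k\<in>Kset n r. b k) = 1"

definition G_sols :: "('a::comm_ring_1 \<Rightarrow> 'b::ring_1) \<Rightarrow> nat \<Rightarrow> nat \<Rightarrow> 'a
    \<Rightarrow> ((nat \<Rightarrow> 'b) \<times> ((nat \<Rightarrow> nat) \<Rightarrow> 'b)) set" where
  "G_sols \<iota> n r q = {(g, b). G_rels \<iota> n r q g b
      \<and> (\<forall>i. i \<notin> {1..n-1} \<longrightarrow> g i = 0) \<and> (\<forall>k. k \<notin> Kset n r \<longrightarrow> b k = 0)}"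

definition Phi :: "('a::comm_ring_1 \<Rightarrow> 'b::ring_1) \<Rightarrow> nat \<Rightarrow> nat \<Rightarrow> 'a \<Rightarrow> (nat \<Rightarrow> 'a)
    \<Rightarrow> (nat \<Rightarrow> 'b) \<times> (nat \<Rightarrow> 'b) \<Rightarrow> (nat \<Rightarrow> 'b) \<times> ((nat \<Rightarrow> nat) \<Rightarrow> 'b)" where
  "Phi \<iota> n r q u = (\<lambda>(t, T).
     ((\<lambda>i. if i \<in> {1..n-1} then T i + Bprime \<iota> n r q u t i (i+1) else 0),
      (\<lambda>k. if k \<in> Kset n r then bprod \<iota> n r u t k else 0)))"

end

theory Submission
  imports Defs
begin


lemma rinv_unit: assumes "\<exists>y. (x::'a::comm_ring_1) * y = 1" shows "x * rinv x = 1"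
  unfolding rinv_def using someI_ex[OF assms] .

lemma rinv_unit': assumes "\<exists>y. (x::'a::comm_ring_1) * y = 1" shows "rinv x * x = 1"
  using rinv_unit[OF assms] by (simp add: mult.commute)

locale ralg =
  fixes \<iota> :: "'a::idom \<Rightarrow> 'b::ring_1"
  assumes R: "R_algebra \<iota>"
begin

lemma i1[simp]: "\<iota> 1 = 1" using R unfolding R_algebra_def by blast
lemma iadd[simp]: "\<iota> (x + y) = \<iota> x + \<iota> y" using R unfolding R_algebra_def by blast
lemma imult[simp]: "\<iota> (x * y) = \<iota> x * \<iota> y" using R unfolding R_algebra_def by blast
lemma icent: "\<iota> x * z = z * \<iota> x" using R unfolding R_algebra_def by blast
lemma i0[simp]: "\<iota> 0 = 0"
proof -
  have "\<iota> 0 = \<iota> 0 + \<iota> 0" by (metis add_0 iadd)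
  then show ?thesis by simp
qed
lemma iminus[simp]: "\<iota> (- x) = - \<iota> x"
proof -
  have "\<iota> (- x) + \<iota> x = 0" by (metis iadd i0 add.left_inverse)
  then show ?thesis by (simp add: eq_neg_iff_add_eq_0)
qed
lemma idiff[simp]: "\<iota> (x - y) = \<iota> x - \<iota> y"
  by (metis diff_conv_add_uminus iadd iminus)
lemma isum: "\<iota> (sum f A) = (\<Sum>x\<in>A. \<iota> (f x))"
  by (induction A rule: infinite_finite_induct) auto
lemma ipow[simp]: "\<iota> (x ^ m) = \<iota> x ^ m"
  by (induction m) auto
lemma iprod_list: "\<iota> (prod_list (map f xs)) = prod_list (map (\<lambda>x. \<iota> (f x)) xs)"
  by (induction xs) auto

lemma icent_assoc: "z * (\<iota> x * w) = \<iota> x * (z * w)"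
  by (metis icent mult.assoc)

lemma polyA_N: assumes "degree p < N"
  shows "polyA \<iota> p x = (\<Sum>i<N. \<iota> (coeff p i) * x ^ i)"
proof -
  have "(\<Sum>i<N. \<iota> (coeff p i) * x ^ i) = (\<Sum>i\<in>{..degree p}. \<iota> (coeff p i) * x ^ i)"
    by (rule sum.mono_neutral_right) (use assms in \<open>auto simp: coeff_eq_0\<close>)
  then show ?thesis unfolding polyA_def by simp
qed

lemma polyA_add: "polyA \<iota> (p + q) x = polyA \<iota> p x + polyA \<iota> q x"
proof -
  define N where "N = Suc (max (degree p) (degree q))"
  have "degree (p + q) < N" using degree_add_le_max[of p q] unfolding N_def by linarith
  then have "polyA \<iota> (p + q) x = (\<Sum>i<N. \<iota> (coeff (p+q) i) * x ^ i)" by (rule polyA_N)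
  also have "\<dots> = (\<Sum>i<N. \<iota> (coeff p i) * x ^ i) + (\<Sum>i<N. \<iota> (coeff q i) * x ^ i)"
    by (simp add: distrib_right sum.distrib)
  also have "\<dots> = polyA \<iota> p x + polyA \<iota> q x"
    by (subst (1 2) polyA_N[where N=N]) (auto simp: N_def)
  finally show ?thesis .
qed

lemma polyA_0[simp]: "polyA \<iota> 0 x = 0" unfolding polyA_def by simp

lemma polyA_pCons: "polyA \<iota> (pCons a p) x = \<iota> a + x * polyA \<iota> p x"
proof -
  define N where "N = Suc (degree p)"
  have d: "degree (pCons a p) < Suc N" unfolding N_def
    by (metis Suc_less_eq degree_pCons_le le_imp_less_Suc)
  have "polyA \<iota> (pCons a p) x = (\<Sum>i<Suc N. \<iota> (coeff (pCons a p) i) * x ^ i)" by (rule polyA_N[OF d])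
  also have "\<dots> = \<iota> a + (\<Sum>i<N. \<iota> (coeff p i) * x ^ Suc i)"
    by (subst sum.lessThan_Suc_shift) simp
  also have "(\<Sum>i<N. \<iota> (coeff p i) * x ^ Suc i) = x * (\<Sum>i<N. \<iota> (coeff p i) * x ^ i)"
    unfolding sum_distrib_left by (rule sum.cong) (auto simp: power_Suc icent_assoc[symmetric])
  also have "(\<Sum>i<N. \<iota> (coeff p i) * x ^ i) = polyA \<iota> p x"
    by (rule polyA_N[symmetric]) (simp add: N_def)
  finally show ?thesis .
qed

lemma polyA_const[simp]: "polyA \<iota> [:a:] x = \<iota> a"
  by (simp add: polyA_pCons)
lemma polyA_1[simp]: "polyA \<iota> 1 x = 1"
  by (simp add: one_pCons polyA_pCons)

lemma polyA_smult: "polyA \<iota> (smult a p) x = \<iota> a * polyA \<iota> p x"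
  by (induction p) (auto simp: polyA_pCons distrib_left icent_assoc)

lemma polyA_mult: "polyA \<iota> (p * q) x = polyA \<iota> p x * polyA \<iota> q x"
proof (induction p)
  case 0 then show ?case by simp
next
  case (pCons a p)
  have "pCons a p * q = smult a q + pCons 0 (p * q)" by simp
  then show ?case using pCons
    by (simp add: polyA_add polyA_smult polyA_pCons distrib_right mult.assoc)
qed

lemma polyA_minus: "polyA \<iota> (- p) x = - polyA \<iota> p x"
  by (metis add.right_inverse eq_neg_iff_add_eq_0 polyA_0 polyA_add)
lemma polyA_diff: "polyA \<iota> (p - q) x = polyA \<iota> p x - polyA \<iota> q x"
  by (metis diff_conv_add_uminus polyA_add polyA_minus)
lemma polyA_sum: "polyA \<iota> (sum f A) x = (\<Sum>a\<in>A. polyA \<iota> (f a) x)"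
  by (induction A rule: infinite_finite_induct) (auto simp: polyA_add)
lemma polyA_prod_list: "polyA \<iota> (prod_list (map f xs)) x = prod_list (map (\<lambda>a. polyA \<iota> (f a) x) xs)"
  by (induction xs) (auto simp: polyA_mult)
lemma polyA_lin[simp]: "polyA \<iota> [:a, 1:] x = \<iota> a + x"
  by (simp add: polyA_pCons)
lemma polyA_X: "polyA \<iota> [:0, 1:] x = x"
  by (simp add: polyA_pCons)

lemma polyA_comm: assumes "x * z = z * x" shows "polyA \<iota> p x * z = z * polyA \<iota> p x"
proof (induction p)
  case 0 then show ?case by simp
next
  case (pCons a p)
  have "(x * polyA \<iota> p x) * z = x * (z * polyA \<iota> p x)" using pCons.IH by (simp add: mult.assoc)
  also have "\<dots> = z * (x * polyA \<iota> p x)" using assms by (simp add: mult.assoc[symmetric])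
  finally show ?case by (simp add: polyA_pCons distrib_left distrib_right icent)
qed

end


declare upt_Suc[simp del]

definition Lag :: "nat \<Rightarrow> (nat \<Rightarrow> 'a::comm_ring_1) \<Rightarrow> nat \<Rightarrow> 'a poly" where
  "Lag r u c = prod_list (map (\<lambda>m. [:-u m, 1:] * [:rinv (u c - u m):]) (filter (\<lambda>m. m \<noteq> c) [1..<r+1]))"

definition Ppol :: "nat \<Rightarrow> (nat \<Rightarrow> 'a::comm_ring_1) \<Rightarrow> 'a poly" where
  "Ppol r u = prod_list (map (\<lambda>c. [:-u c, 1:]) [1..<r+1])"

lemma poly_prod_list_map: "poly (prod_list (map f xs)) y = prod_list (map (\<lambda>x. poly (f x) y) xs)"
  by (induction xs) auto

lemma prod_list_zero: "x \<in> set xs \<Longrightarrow> f x = (0::'b::ring_1) \<Longrightarrow> prod_list (map f xs) = 0"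
  by (induction xs) auto

lemma prod_list_one: "(\<And>x. x \<in> set xs \<Longrightarrow> f x = (1::'b::monoid_mult)) \<Longrightarrow> prod_list (map f xs) = 1"
  by (induction xs) auto

locale udata =
  fixes r :: nat and u :: "nat \<Rightarrow> 'a::idom"
  assumes Dunit: "\<exists>y. Vdelta r u * y = 1"
begin

lemma unit_diff: assumes a: "a \<in> {1..r}" and c: "c \<in> {1..r}" and ac: "a \<noteq> c"
  shows "\<exists>y. (u a - u c) * y = 1"
proof -
  have gen: "\<exists>y. (u a - u c) * y = 1" if "c < a" "a \<le> r" "1 \<le> c" for a c
  proof -
    define S where "S = {(i,j). 1 \<le> j \<and> j < i \<and> i \<le> r}"
    have fin: "finite S" unfolding S_def
      by (rule finite_subset[of _ "{..r} \<times> {..r}"]) auto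
    have mem: "(a, c) \<in> S" using that unfolding S_def by auto
    have "Vdelta r u = (u a - u c) * (\<Prod>(i,j)\<in>S - {(a,c)}. u i - u j)"
      unfolding Vdelta_def S_def[symmetric] using prod.remove[OF fin mem, of "\<lambda>(i,j). u i - u j"] by simp
    with Dunit obtain y where "(u a - u c) * (\<Prod>(i,j)\<in>S - {(a,c)}. u i - u j) * y = 1" by auto
    then show ?thesis by (metis mult.assoc)
  qed
  show ?thesis
  proof (cases "c < a")
    case True then show ?thesis using gen a c by auto
  next
    case False
    then have "a < c" using ac by auto
    then obtain y where "(u c - u a) * y = 1" using gen a c by auto
    then have "(u a - u c) * (- y) = 1" by (simp add: algebra_simps)
    then show ?thesis by blast
  qed
qed

lemma u_inj: "a \<in> {1..r} \<Longrightarrow> c \<in> {1..r} \<Longrightarrow> a \<noteq> c \<Longrightarrow> u a \<noteq> u c"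
  using unit_diff by fastforce

lemma rinv_diff: "a \<in> {1..r} \<Longrightarrow> c \<in> {1..r} \<Longrightarrow> a \<noteq> c \<Longrightarrow> (u a - u c) * rinv (u a - u c) = 1"
  using unit_diff rinv_unit by blast

lemma scal: assumes a: "a \<in> {1..r}" and c: "c \<in> {1..r}"
  shows "prod_list (map (\<lambda>m. (u a - u m) * rinv (u c - u m)) (filter (\<lambda>m. m \<noteq> c) [1..<r+1]))
     = (if a = c then 1 else 0)"
proof (cases "a = c")
  case True
  have "prod_list (map (\<lambda>m. (u a - u m) * rinv (u c - u m)) (filter (\<lambda>m. m \<noteq> c) [1..<r+1])) = 1"
    by (rule prod_list_one) (use True c rinv_diff in auto)
  then show ?thesis using True by simp
next
  case False
  have "prod_list (map (\<lambda>m. (u a - u m) * rinv (u c - u m)) (filter (\<lambda>m. m \<noteq> c) [1..<r+1])) = 0"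
    by (rule prod_list_zero[of a]) (use False a in auto)
  then show ?thesis using False by simp
qed

lemma poly_Lag: "a \<in> {1..r} \<Longrightarrow> c \<in> {1..r} \<Longrightarrow> poly (Lag r u c) (u a) = (if a = c then 1 else 0)"
proof -
  assume a: "a \<in> {1..r}" and c: "c \<in> {1..r}"
  have e: "(\<lambda>m. poly ([:-u m, 1:] * [:rinv (u c - u m):]) (u a)) = (\<lambda>m. (u a - u m) * rinv (u c - u m))"
    by (auto simp: fun_eq_iff algebra_simps)
  show ?thesis unfolding Lag_def poly_prod_list_map e using scal[OF a c] .
qed

lemma dvd_vanish: "distinct cs \<Longrightarrow> set cs \<subseteq> {1..r} \<Longrightarrow> (\<forall>c\<in>set cs. poly f (u c) = 0)
   \<Longrightarrow> prod_list (map (\<lambda>c. [:-u c, 1:]) cs) dvd f"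
proof (induction cs arbitrary: f)
  case Nil then show ?case by simp
next
  case (Cons c cs)
  have "[:-u c, 1:] dvd f" using Cons.prems poly_eq_0_iff_dvd by auto
  then obtain g where g: "f = [:-u c, 1:] * g" by (auto elim: dvdE)
  have "\<forall>c'\<in>set cs. poly g (u c') = 0"
  proof
    fix c' assume c': "c' \<in> set cs"
    have "poly f (u c') = 0" using Cons.prems c' by auto
    then have h1: "(u c' - u c) * poly g (u c') = 0" using g by (simp only: poly_mult) (simp add: algebra_simps)
    have ne: "u c' \<noteq> u c" using Cons.prems c' by (intro u_inj) auto
    show "poly g (u c') = 0" using h1 ne by (simp only: mult_eq_0_iff right_minus_eq) blast
  qed
  then have "prod_list (map (\<lambda>c. [:-u c, 1:]) cs) dvd g" using Cons by auto
  then have "[:-u c, 1:] * prod_list (map (\<lambda>c. [:-u c, 1:]) cs) dvd [:-u c, 1:] * g"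
    by (rule mult_dvd_mono[OF dvd_refl])
  then show ?case using g by (simp only: list.map prod_list.Cons)
qed

lemma Ppol_dvd: "(\<forall>c\<in>{1..r}. poly f (u c) = 0) \<Longrightarrow> Ppol r u dvd f"
  unfolding Ppol_def by (rule dvd_vanish) auto

lemma degree_lin_prod: "degree (prod_list (map (\<lambda>c. [:-u c, 1:]) cs)) = length cs
   \<and> prod_list (map (\<lambda>c. [:-u c, 1:]) cs) \<noteq> 0"
proof (induction cs)
  case Nil then show ?case by simp
next
  case (Cons a cs)
  let ?P = "prod_list (map (\<lambda>c. [:-u c, 1:]) cs)"
  have nz: "[:-u a, 1:] \<noteq> 0" by simp
  have "degree ([:-u a, 1:] * ?P) = degree [:-u a, 1:] + degree ?P"
    by (rule degree_mult_eq) (use Cons nz in auto)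
  moreover have "[:-u a, 1:] * ?P \<noteq> 0" using Cons.IH nz no_zero_divisors by blast
  ultimately show ?case using Cons.IH by (simp only: list.map prod_list.Cons list.size) simp
qed

lemma degree_Ppol: "degree (Ppol r u) = r"
  unfolding Ppol_def using degree_lin_prod[of "[1..<r+1]"] by simp

lemma deg_lin_const: "degree ([:a, 1:] * [:b:]) \<le> 1"
proof -
  have "[:a, 1:] * [:b:] = smult b [:a, 1:]" by (simp add: mult.commute)
  moreover have "degree (smult b [:a, 1:]) \<le> degree [:a, 1:]" by (rule degree_smult_le)
  ultimately show ?thesis by simp
qed

lemma degree_Lag: assumes c: "c \<in> {1..r}" shows "degree (Lag r u c) \<le> r - 1"
proof -
  let ?xs = "filter (\<lambda>m. m \<noteq> c) [1..<r+1]"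
  have "degree (Lag r u c) \<le> sum_list (map degree (map (\<lambda>m. [:-u m, 1:] * [:rinv (u c - u m):]) ?xs))"
    unfolding Lag_def by (rule degree_prod_list_le)
  also have "\<dots> \<le> sum_list (map (\<lambda>m. 1) ?xs)"
    unfolding map_map o_def
    by (rule sum_list_mono) (rule deg_lin_const)
  also have "\<dots> = length ?xs" by (simp add: sum_list_triv)
  also have "length ?xs < length [1..<r+1]" by (rule length_filter_less) (use c in auto)
  then have "length ?xs \<le> r - 1" by simp
  finally show ?thesis .
qed

lemma Fpol_eq: assumes c: "c \<in> {1..r}" shows "Fpol r u c = smult (Vdelta r u) (Lag r u c)"
  unfolding Fpol_def
proof (rule the_equality)
  show "degree (smult (Vdelta r u) (Lag r u c)) \<le> r - 1 \<and>
    (\<forall>c'\<in>{1..r}. poly (smult (Vdelta r u) (Lag r u c)) (u c') = (if c = c' then Vdelta r u else 0))"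
  proof
    show "degree (smult (Vdelta r u) (Lag r u c)) \<le> r - 1"
      using degree_Lag[OF c] degree_smult_le[of "Vdelta r u" "Lag r u c"] by linarith
    show "\<forall>c'\<in>{1..r}. poly (smult (Vdelta r u) (Lag r u c)) (u c') = (if c = c' then Vdelta r u else 0)"
      using poly_Lag c by auto
  qed
next
  fix p assume p: "degree p \<le> r - 1 \<and> (\<forall>c'\<in>{1..r}. poly p (u c') = (if c = c' then Vdelta r u else 0))"
  define f where "f = p - smult (Vdelta r u) (Lag r u c)"
  have "\<forall>c'\<in>{1..r}. poly f (u c') = 0" unfolding f_def using p poly_Lag c by auto
  then have dv: "Ppol r u dvd f" by (rule Ppol_dvd)
  have df: "degree f \<le> r - 1" unfolding f_def using p degree_Lag[OF c]
    using degree_diff_le_max[of p "smult (Vdelta r u) (Lag r u c)"] degree_smult_le[of "Vdelta r u" "Lag r u c"]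
    by linarith
  have "f = 0"
  proof (rule ccontr)
    assume "f \<noteq> 0"
    then have "degree (Ppol r u) \<le> degree f" using dv by (rule dvd_imp_degree_le[rotated])
    then show False using df degree_Ppol c by auto
  qed
  then show "p = smult (Vdelta r u) (Lag r u c)" unfolding f_def by simp
qed

lemma poly_Fpol: "c \<in> {1..r} \<Longrightarrow> c' \<in> {1..r} \<Longrightarrow> poly (Fpol r u c) (u c') = (if c = c' then Vdelta r u else 0)"
  using Fpol_eq poly_Lag by auto

end


lemma Kset_iff: "k \<in> Kset n r \<longleftrightarrow> (\<forall>l\<in>{1..n}. k l \<in> {1..r}) \<and> (\<forall>l. l \<notin> {1..n} \<longrightarrow> k l = undefined)"
  unfolding Kset_def PiE_iff extensional_def by auto

lemma Kset_eq: "k \<in> Kset n r \<Longrightarrow> k' \<in> Kset n r \<Longrightarrow> (k = k') \<longleftrightarrow> (\<forall>l\<in>{1..n}. k l = k' l)"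
  unfolding Kset_iff by (auto simp: fun_eq_iff)

lemma finK[simp]: "finite (Kset n r)"
  unfolding Kset_def by (rule finite_PiE) auto

lemma prod_list_ind: "prod_list (map (\<lambda>x. if P x then 1 else 0) xs) = (if \<forall>x\<in>set xs. P x then 1 else (0::'a::semiring_1))"
  by (induction xs) auto

locale fw = ralg \<iota> + udata r u
  for \<iota> :: "'a::idom \<Rightarrow> 'b::ring_1" and r u +
  fixes n :: nat and q :: 'a and b :: "(nat \<Rightarrow> nat) \<Rightarrow> 'b" and t :: "nat \<Rightarrow> 'b"
  assumes n1: "n \<ge> 1" and r1: "r \<ge> 1" and qunit: "\<exists>y. q * y = 1"
    and orth: "\<And>k k'. k \<in> Kset n r \<Longrightarrow> k' \<in> Kset n r \<Longrightarrow> b k * b k' = (if k = k' then b k else 0)"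
    and sum1: "(\<Sum>k\<in>Kset n r. b k) = 1"
    and tD: "\<And>l. l \<in> {1..n} \<Longrightarrow> t l = (\<Sum>k\<in>Kset n r. \<iota> (u (k l)) * b k)"
begin

abbreviation K where "K \<equiv> Kset n r"

definition D :: "((nat \<Rightarrow> nat) \<Rightarrow> 'a) \<Rightarrow> 'b" where
  "D f = (\<Sum>k\<in>K. \<iota> (f k) * b k)"

lemma D_cong: "(\<And>k. k \<in> K \<Longrightarrow> f k = g k) \<Longrightarrow> D f = D g"
  unfolding D_def by (rule sum.cong) auto

lemma D_add: "D (\<lambda>k. f k + g k) = D f + D g"
  unfolding D_def by (simp add: distrib_right sum.distrib)

lemma D_minus: "D (\<lambda>k. - f k) = - D f"
  unfolding D_def by (simp add: sum_negf)

lemma D_diff: "D (\<lambda>k. f k - g k) = D f - D g"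
  unfolding D_def by (simp add: left_diff_distrib sum_subtractf)

lemma D_const: "D (\<lambda>k. a) = \<iota> a"
  unfolding D_def by (simp add: sum_distrib_left[symmetric] sum1)

lemma D_0: "D (\<lambda>k. 0) = 0" using D_const[of 0] by simp
lemma D_1: "D (\<lambda>k. 1) = 1" using D_const[of 1] by simp

lemma D_mult: "D f * D g = D (\<lambda>k. f k * g k)"
proof -
  have "D f * D g = (\<Sum>k\<in>K. \<Sum>k'\<in>K. \<iota> (f k) * b k * (\<iota> (g k') * b k'))"
    unfolding D_def by (simp add: sum_product)
  also have "\<dots> = (\<Sum>k\<in>K. \<Sum>k'\<in>K. if k' = k then \<iota> (f k * g k) * b k else 0)"
  proof (intro sum.cong refl)
    fix k k' assume "k \<in> K" "k' \<in> K"
    have "\<iota> (f k) * b k * (\<iota> (g k') * b k') = \<iota> (f k) * (b k * (\<iota> (g k') * b k'))"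
      by (simp only: mult.assoc)
    also have "\<dots> = \<iota> (f k) * (\<iota> (g k') * (b k * b k'))"
      using icent_assoc[of "b k" "g k'" "b k'"] by (simp only:)
    finally have "\<iota> (f k) * b k * (\<iota> (g k') * b k') = \<iota> (f k) * \<iota> (g k') * (b k * b k')"
      by (simp only: mult.assoc)
    also have "\<dots> = (if k' = k then \<iota> (f k * g k) * b k else 0)"
      using orth[OF \<open>k \<in> K\<close> \<open>k' \<in> K\<close>] by auto
    finally show "\<iota> (f k) * b k * (\<iota> (g k') * b k') = (if k' = k then \<iota> (f k * g k) * b k else 0)" .
  qed
  also have "\<dots> = D (\<lambda>k. f k * g k)"
    unfolding D_def by (simp add: sum.delta)
  finally show ?thesis .
qed

lemma D_comm: "D f * D g = D g * D f"
  by (simp add: D_mult mult.commute)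

lemma D_scal: "\<iota> a * D f = D (\<lambda>k. a * f k)"
  using D_mult[of "\<lambda>k. a" f] D_const by simp

lemma D_delta: "k0 \<in> K \<Longrightarrow> D (\<lambda>k. if k = k0 then 1 else 0) = b k0"
proof -
  assume k0: "k0 \<in> K"
  have "D (\<lambda>k. if k = k0 then 1 else 0) = (\<Sum>k\<in>K. if k = k0 then b k else 0)"
    unfolding D_def by (rule sum.cong) auto
  also have "\<dots> = b k0" using k0 by (simp add: sum.delta)
  finally show ?thesis .
qed

lemma D_b: "k0 \<in> K \<Longrightarrow> b k0 = D (\<lambda>k. if k = k0 then 1 else 0)"
  using D_delta by simp

lemma D_sum: "(\<Sum>x\<in>A. D (f x)) = D (\<lambda>k. \<Sum>x\<in>A. f x k)"
  unfolding D_def by (simp add: isum sum_distrib_right) (rule sum.swap)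

lemma D_prod_list: "prod_list (map (\<lambda>x. D (f x)) xs) = D (\<lambda>k. prod_list (map (\<lambda>x. f x k) xs))"
  by (induction xs) (auto simp: D_1 D_mult)

lemma D_ind: "(\<Sum>k\<in>{k\<in>K. P k}. b k) = D (\<lambda>k. if P k then 1 else 0)"
proof -
  have "D (\<lambda>k. if P k then 1 else 0) = (\<Sum>k\<in>K. if P k then b k else 0)"
    unfolding D_def by (rule sum.cong) auto
  then show ?thesis by (simp add: sum.inter_filter)
qed

lemma t_D: "l \<in> {1..n} \<Longrightarrow> t l = D (\<lambda>k. u (k l))"
  unfolding D_def by (rule tD)

lemma D_pow: "D f ^ m = D (\<lambda>k. f k ^ m)"
  by (induction m) (auto simp: D_1 D_mult)

lemma polyA_D: "polyA \<iota> p (D f) = D (\<lambda>k. poly p (f k))"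
proof (induction p)
  case 0 then show ?case by (simp add: D_0)
next
  case (pCons a p)
  have "polyA \<iota> (pCons a p) (D f) = D (\<lambda>k. a) + D f * D (\<lambda>k. poly p (f k))"
    by (simp only: polyA_pCons D_const pCons.IH)
  then show ?case by (simp add: D_mult D_add)
qed

lemma commD: "D f * x = x * D f" if "\<And>k. k \<in> K \<Longrightarrow> b k * x = x * b k"
  unfolding D_def sum_distrib_left sum_distrib_right
proof (rule sum.cong[OF refl])
  fix k assume k: "k \<in> K"
  have "\<iota> (f k) * b k * x = \<iota> (f k) * (x * b k)" by (simp only: mult.assoc that[OF k])
  also have "\<dots> = x * (\<iota> (f k) * b k)" by (rule icent_assoc[symmetric])
  finally show "\<iota> (f k) * b k * x = x * (\<iota> (f k) * b k)" .
qed

end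


definition bq :: "('a::comm_ring_1 \<Rightarrow> 'b::ring_1) \<Rightarrow> nat \<Rightarrow> nat \<Rightarrow> (nat \<Rightarrow> 'a)
    \<Rightarrow> (nat \<Rightarrow> 'b) \<Rightarrow> (nat \<Rightarrow> nat) \<Rightarrow> (nat \<Rightarrow> nat) \<Rightarrow> 'b" where
  "bq \<iota> n r u t \<phi> k0 = prod_list (map (\<lambda>l. prod_list (map (\<lambda>m. (t (\<phi> l) - \<iota> (u m)) * \<iota> (rinv (u (k0 l) - u m)))
        (filter (\<lambda>m. m \<noteq> k0 l) [1..<r+1]))) [1..<n+1])"

lemma bprod_bq: "bprod \<iota> n r u t k0 = bq \<iota> n r u t id k0"
  unfolding bprod_def bq_def by simp

definition swp :: "nat \<Rightarrow> nat \<Rightarrow> nat" where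
  "swp i l = (if l = i then i+1 else if l = i+1 then i else l)"

lemma sact_swp: "sact i k l = k (swp i l)"
  unfolding sact_def swp_def by simp

lemma swp_swp[simp]: "swp i (swp i l) = l"
  unfolding swp_def by auto

lemma swp_range: "i \<in> {1..n-1} \<Longrightarrow> l \<in> {1..n} \<Longrightarrow> swp i l \<in> {1..n}"
  unfolding swp_def by auto

lemma sact_K: assumes i: "i \<in> {1..n-1}" and k: "k \<in> Kset n r" shows "sact i k \<in> Kset n r"
  using k i unfolding Kset_iff sact_def by auto

lemma sact_sact[simp]: "sact i (sact i k) = k"
  unfolding sact_def by (auto simp: fun_eq_iff)

lemma twist_prod_list: "(\<And>x. x \<in> set xs \<Longrightarrow> g * f x = h x * g) \<Longrightarrow>
   g * prod_list (map f xs) = prod_list (map h xs) * (g::'b::monoid_mult)"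
proof (induction xs)
  case Nil then show ?case by simp
next
  case (Cons a xs)
  have "g * prod_list (map f (a # xs)) = (g * f a) * prod_list (map f xs)" by (simp add: mult.assoc)
  also have "\<dots> = h a * (g * prod_list (map f xs))" using Cons.prems by (simp add: mult.assoc)
  also have "\<dots> = h a * (prod_list (map h xs) * g)" using Cons by simp
  finally show ?case by (simp add: mult.assoc)
qed

context fw begin

abbreviation "Cq \<equiv> q - rinv q"

lemma BQ: assumes phi: "\<And>l. l \<in> {1..n} \<Longrightarrow> \<phi> l \<in> {1..n}" and k0: "k0 \<in> K"
  shows "bq \<iota> n r u t \<phi> k0 = D (\<lambda>k. if \<forall>l\<in>{1..n}. k (\<phi> l) = k0 l then 1 else 0)"
proof -
  have fac: "(t (\<phi> l) - \<iota> (u m)) * \<iota> (rinv (u (k0 l) - u m)) = D (\<lambda>k. (u (k (\<phi> l)) - u m) * rinv (u (k0 l) - u m))"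
    if l: "l \<in> {1..n}" for l m
  proof -
    have "t (\<phi> l) - \<iota> (u m) = D (\<lambda>k. u (k (\<phi> l)) - u m)"
      using t_D[OF phi[OF l]] D_diff[of "\<lambda>k. u (k (\<phi> l))" "\<lambda>k. u m"] D_const[of "u m"] by simp
    then show ?thesis
      using D_mult[of "\<lambda>k. u (k (\<phi> l)) - u m" "\<lambda>k. rinv (u (k0 l) - u m)"] D_const[of "rinv (u (k0 l) - u m)"]
      by simp
  qed
  have inner: "prod_list (map (\<lambda>m. (t (\<phi> l) - \<iota> (u m)) * \<iota> (rinv (u (k0 l) - u m))) xs)
      = D (\<lambda>k. prod_list (map (\<lambda>m. (u (k (\<phi> l)) - u m) * rinv (u (k0 l) - u m)) xs))"
    if l: "l \<in> {1..n}" for l xs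
    using fac[OF l] by (simp add: D_prod_list)
  have "bq \<iota> n r u t \<phi> k0 = prod_list (map (\<lambda>l. D (\<lambda>k. prod_list (map (\<lambda>m. (u (k (\<phi> l)) - u m) * rinv (u (k0 l) - u m))
        (filter (\<lambda>m. m \<noteq> k0 l) [1..<r+1])))) [1..<n+1])"
    unfolding bq_def by (rule arg_cong[where f=prod_list], rule map_cong[OF refl], rule inner) auto
  also have "\<dots> = D (\<lambda>k. prod_list (map (\<lambda>l. prod_list (map (\<lambda>m. (u (k (\<phi> l)) - u m) * rinv (u (k0 l) - u m))
        (filter (\<lambda>m. m \<noteq> k0 l) [1..<r+1]))) [1..<n+1]))"
    by (rule D_prod_list)
  also have "\<dots> = D (\<lambda>k. prod_list (map (\<lambda>l. if k (\<phi> l) = k0 l then 1 else 0) [1..<n+1]))"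
  proof (rule D_cong, rule arg_cong[where f=prod_list], rule map_cong[OF refl])
    fix k l assume k: "k \<in> K" and l: "l \<in> set [1..<n+1]"
    then have l': "l \<in> {1..n}" by auto
    have a: "k (\<phi> l) \<in> {1..r}" using k phi[OF l'] unfolding Kset_iff by blast
    have c: "k0 l \<in> {1..r}" using k0 l' unfolding Kset_iff by blast
    show "prod_list (map (\<lambda>m. (u (k (\<phi> l)) - u m) * rinv (u (k0 l) - u m)) (filter (\<lambda>m. m \<noteq> k0 l) [1..<r+1]))
       = (if k (\<phi> l) = k0 l then 1 else 0)" by (rule scal[OF a c])
  qed
  also have "\<dots> = D (\<lambda>k. if \<forall>l\<in>{1..n}. k (\<phi> l) = k0 l then 1 else 0)"
    by (rule D_cong) (simp add: prod_list_ind atLeastLessThanSuc_atLeastAtMost)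
  finally show ?thesis .
qed

lemma bprod_b: assumes k0: "k0 \<in> K" shows "bprod \<iota> n r u t k0 = b k0"
proof -
  have "bprod \<iota> n r u t k0 = D (\<lambda>k. if \<forall>l\<in>{1..n}. k l = k0 l then 1 else 0)"
    unfolding bprod_bq by (subst BQ) (use k0 in auto)
  also have "\<dots> = D (\<lambda>k. if k = k0 then 1 else 0)"
    by (rule D_cong) (use Kset_eq k0 in auto)
  also have "\<dots> = b k0" by (rule D_delta[OF k0])
  finally show ?thesis .
qed

lemma Bprime_D: "Bprime \<iota> n r q u t i j = D (\<lambda>k. - Cq * (if k i < k j then 1 else 0))"
proof -
  have "(\<Sum>k\<in>{k\<in>K. k i < k j}. bprod \<iota> n r u t k) = (\<Sum>k\<in>{k\<in>K. k i < k j}. b k)"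
    by (rule sum.cong) (auto simp: bprod_b)
  moreover have "- \<iota> Cq * D (\<lambda>k. if k i < k j then 1 else 0) = D (\<lambda>k. - Cq * (if k i < k j then 1 else 0))"
    using D_scal[of "- Cq" "\<lambda>k. if k i < k j then 1 else 0"] by simp
  ultimately show ?thesis unfolding Bprime_def by (simp only: D_ind)
qed

lemma e_D: "e_idem n r b i = D (\<lambda>k. if k i = k (i+1) then 1 else 0)"
  unfolding e_idem_def by (rule D_ind)

lemma D_sum2: "(\<Sum>(c1,c2)\<in>A. D (f c1 c2)) = D (\<lambda>k. \<Sum>(c1,c2)\<in>A. f c1 c2 k)"
proof -
  have "(\<Sum>p\<in>A. D (\<lambda>k. f (fst p) (snd p) k)) = D (\<lambda>k. \<Sum>p\<in>A. f (fst p) (snd p) k)" by (rule D_sum)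
  then show ?thesis by (simp add: split_def)
qed

lemma Dunit2: "\<exists>y. (Vdelta r u)^2 * y = 1"
proof -
  obtain y where "Vdelta r u * y = 1" using Dunit by blast
  then have "(Vdelta r u)^2 * y^2 = 1" by (metis power_mult_distrib one_power2)
  then show ?thesis by blast
qed

lemma polyA_Fpol: assumes c: "c \<in> {1..r}" and l: "l \<in> {1..n}"
  shows "polyA \<iota> (Fpol r u c) (t l) = D (\<lambda>k. if c = k l then Vdelta r u else 0)"
proof -
  have "polyA \<iota> (Fpol r u c) (t l) = D (\<lambda>k. poly (Fpol r u c) (u (k l)))"
    using t_D[OF l] polyA_D by simp
  also have "\<dots> = D (\<lambda>k. if c = k l then Vdelta r u else 0)"
    by (rule D_cong) (use c l poly_Fpol in \<open>auto simp: Kset_iff\<close>)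
  finally show ?thesis .
qed

lemma Hcorr_D: assumes j: "j \<in> {2..n}"
  shows "Hcorr \<iota> r q u t j = D (\<lambda>k. Cq * (if k (j-1) < k j then u (k j) - u (k (j-1)) else 0))"
proof -
  define Pr where "Pr = {(c1,c2). 1 \<le> c1 \<and> c1 < c2 \<and> c2 \<le> (r::nat)}"
  have finPr: "finite Pr" unfolding Pr_def by (rule finite_subset[of _ "{..r} \<times> {..r}"]) auto
  have j1: "j - 1 \<in> {1..n}" and j2: "j \<in> {1..n}" using j by auto
  let ?V = "Vdelta r u"
  have trm: "\<iota> ((u c2 - u c1) * Cq) * polyA \<iota> (Fpol r u c1) (t (j-1)) * polyA \<iota> (Fpol r u c2) (t j)
     = D (\<lambda>k. ((u c2 - u c1) * Cq) * ((if c1 = k (j-1) then ?V else 0) * (if c2 = k j then ?V else 0)))"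
    if "(c1, c2) \<in> Pr" for c1 c2
  proof -
    have c: "c1 \<in> {1..r}" "c2 \<in> {1..r}" using that unfolding Pr_def by auto
    show ?thesis using polyA_Fpol[OF c(1) j1] polyA_Fpol[OF c(2) j2]
      by (simp only: mult.assoc D_mult D_scal)
  qed
  have "Hcorr \<iota> r q u t j = \<iota> (rinv (?V^2)) * (\<Sum>(c1,c2)\<in>Pr.
      D (\<lambda>k. ((u c2 - u c1) * Cq) * ((if c1 = k (j-1) then ?V else 0) * (if c2 = k j then ?V else 0))))"
    unfolding Hcorr_def Pr_def[symmetric]
    by (rule arg_cong[where f="\<lambda>x. _ * x"], rule sum.cong[OF refl]) (clarify, rule trm)
  also have "\<dots> = D (\<lambda>k. rinv (?V^2) * (\<Sum>(c1,c2)\<in>Pr.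
      (u c2 - u c1) * Cq * (if c1 = k (j-1) then ?V else 0) * (if c2 = k j then ?V else 0)))"
    by (simp only: D_sum2 D_scal mult.assoc)
  also have "\<dots> = D (\<lambda>k. Cq * (if k (j-1) < k j then u (k j) - u (k (j-1)) else 0))"
  proof (rule D_cong)
    fix k assume k: "k \<in> K"
    have kr: "k (j-1) \<in> {1..r}" "k j \<in> {1..r}" using k j1 j2 unfolding Kset_iff by blast+
    have "(\<Sum>(c1,c2)\<in>Pr. (u c2 - u c1) * Cq * (if c1 = k (j-1) then ?V else 0) * (if c2 = k j then ?V else 0))
       = (\<Sum>p\<in>Pr. if p = (k (j-1), k j) then (u (k j) - u (k (j-1))) * Cq * ?V^2 else 0)"
      by (rule sum.cong) (auto simp: power2_eq_square split: if_split_asm)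
    also have "\<dots> = (if k (j-1) < k j then (u (k j) - u (k (j-1))) * Cq * ?V^2 else 0)"
      using kr by (subst sum.delta[OF finPr]) (auto simp: Pr_def)
    finally show "rinv (?V^2) * (\<Sum>(c1,c2)\<in>Pr. (u c2 - u c1) * Cq * (if c1 = k (j-1) then ?V else 0) * (if c2 = k j then ?V else 0))
       = Cq * (if k (j-1) < k j then u (k j) - u (k (j-1)) else 0)"
      using rinv_unit'[OF Dunit2] by (simp add: algebra_simps)
  qed
  finally show ?thesis .
qed

lemma tw_D: assumes i: "i \<in> {1..n-1}" and tw: "\<And>k. k \<in> K \<Longrightarrow> g * b k = b (sact i k) * g"
  shows "g * D f = D (\<lambda>k. f (sact i k)) * g"
proof -
  have "g * D f = (\<Sum>k\<in>K. \<iota> (f k) * b (sact i k)) * g"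
    unfolding D_def sum_distrib_left sum_distrib_right
  proof (rule sum.cong[OF refl])
    fix k assume k: "k \<in> K"
    have "g * (\<iota> (f k) * b k) = \<iota> (f k) * (g * b k)" by (rule icent_assoc)
    then show "g * (\<iota> (f k) * b k) = \<iota> (f k) * b (sact i k) * g" using tw[OF k] by (simp add: mult.assoc)
  qed
  also have "(\<Sum>k\<in>K. \<iota> (f k) * b (sact i k)) = D (\<lambda>k. f (sact i k))"
    unfolding D_def
    by (rule sum.reindex_bij_witness[where i="sact i" and j="sact i"]) (auto simp: sact_K[OF i])
  finally show ?thesis .
qed

lemma tw_fwd: assumes i: "i \<in> {1..n-1}" and tw: "\<And>k. k \<in> K \<Longrightarrow> g * b k = b (sact i k) * g"
  and l: "l \<in> {1..n}" shows "g * t l = t (swp i l) * g"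
  using tw_D[OF i tw, of "\<lambda>k. u (k l)"] t_D[OF l] t_D[OF swp_range[OF i l]] by (simp add: sact_swp)

lemma tw_back: assumes i: "i \<in> {1..n-1}" and tw: "\<And>l. l \<in> {1..n} \<Longrightarrow> g * t l = t (swp i l) * g"
  and k: "k \<in> K" shows "g * b k = b (sact i k) * g"
proof -
  have fac: "g * ((t l - \<iota> a) * \<iota> c) = ((t (swp i l) - \<iota> a) * \<iota> c) * g" if l: "l \<in> {1..n}" for l a c
  proof -
    have "g * ((t l - \<iota> a) * \<iota> c) = (g * t l - g * \<iota> a) * \<iota> c" by (simp add: algebra_simps)
    also have "\<dots> = (t (swp i l) * g - \<iota> a * g) * \<iota> c" using tw[OF l] icent by simp
    also have "\<dots> = (t (swp i l) - \<iota> a) * (g * \<iota> c)" by (simp add: algebra_simps)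
    also have "\<dots> = ((t (swp i l) - \<iota> a) * \<iota> c) * g" using icent by (simp add: mult.assoc)
    finally show ?thesis .
  qed
  have "g * bq \<iota> n r u t id k = bq \<iota> n r u t (swp i) k * g"
    unfolding bq_def
    apply (rule twist_prod_list, rule twist_prod_list)
    apply (simp only: id_apply)
    apply (rule fac)
    by auto
  moreover have "bq \<iota> n r u t (swp i) k = b (sact i k)"
  proof -
    have "bq \<iota> n r u t (swp i) k = D (\<lambda>k'. if \<forall>l\<in>{1..n}. k' (swp i l) = k l then 1 else 0)"
      by (rule BQ[OF swp_range[OF i] k])
    also have "\<dots> = D (\<lambda>k'. if k' = sact i k then 1 else 0)"
    proof (rule D_cong)
      fix k' assume k': "k' \<in> K"
      have "(\<forall>l\<in>{1..n}. k' (swp i l) = k l) \<longleftrightarrow> (\<forall>l\<in>{1..n}. k' l = sact i k l)"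
        unfolding sact_swp using swp_range[OF i] by (metis swp_swp)
      also have "\<dots> \<longleftrightarrow> k' = sact i k" using Kset_eq[OF k' sact_K[OF i k]] by simp
      finally show "(if \<forall>l\<in>{1..n}. k' (swp i l) = k l then 1 else 0) = (if k' = sact i k then 1 else (0::'a))" by simp
    qed
    also have "\<dots> = b (sact i k)" by (rule D_delta[OF sact_K[OF i k]])
    finally show ?thesis .
  qed
  ultimately show ?thesis using bprod_b[OF k] by (simp add: bprod_bq)
qed

end

lemma quadid:
  fixes g B B' Q Q' :: "'b::ring_1"
  assumes gB: "g * B = B' * g" and QQ: "Q * Q' = 1" and c1: "g * Q' = Q' * g" and c2: "B * Q' = Q' * B"
  shows "(g - B - Q) * (g - B + Q') = g*g - (B' + B + (Q - Q')) * g + (B*B + (Q - Q')*B) - 1"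
proof -
  have "(g - B - Q) * (g - B + Q') = g*g - g*B + g*Q' - B*g + B*B - B*Q' - Q*g + Q*B - Q*Q'"
    by (simp add: algebra_simps)
  also have "\<dots> = g*g - B'*g + Q'*g - B*g + B*B - Q'*B - Q*g + Q*B - 1"
    by (simp only: gB c1 c2 QQ)
  also have "\<dots> = g*g - (B' + B + (Q - Q')) * g + (B*B + (Q - Q')*B) - 1"
    by (simp add: algebra_simps)
  finally show ?thesis .
qed

lemma farid:
  fixes a b x y :: "'b::ring_1"
  assumes "a * y = y * a" "b * x = x * b" "x * y = y * x"
  shows "(a - x) * (b - y) - (b - y) * (a - x) = a * b - b * a"
proof -
  have "(a - x) * (b - y) - (b - y) * (a - x) = a*b - a*y - x*b + x*y - (b*a - b*x - y*a + y*x)"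
    by (simp add: algebra_simps)
  also have "\<dots> = a * b - b * a" using assms by (simp add: algebra_simps)
  finally show ?thesis .
qed

lemma braid_gen:
  fixes a b x y x1 y1 x2 y2 Ea Eb :: "'b::ring_1"
  assumes h1: "a * x = x1 * a" and h2: "a * y = y1 * a" and h3: "b * x = x2 * b" and h4: "b * y = y2 * b"
    and h5: "a * x2 = y * a" and h6: "b * y1 = x * b"
    and h7: "a * a = 1 + Ea * a" and h8: "b * b = 1 + Eb * b"
    and c3: "y1 = x2" and c4: "y1 * x1 + x * y = y1 * Ea + y * y1"
    and c5: "x * x2 + x2 * Eb = x2 * y2 + y * x" and c6: "x * y * x = y * x * y"
  shows "(a - x) * (b - y) * (a - x) - (b - y) * (a - x) * (b - y) = a * b * a - b * a * b"
proof -
  have e1: "(a - x) * (b - y) * (a - x) = a*b*a - a*b*x - a*y*a + a*y*x - x*b*a + x*b*x + x*y*a - x*y*x"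
    by (simp add: algebra_simps)
  have f1: "a*b*x = y*a*b" using h3 h5 by (metis mult.assoc)
  have f2: "a*y*a = y1 + y1*Ea*a" using h2 h7 by (simp add: mult.assoc distrib_left)
  have f3: "a*y*x = y1*x1*a" using h1 h2 by (metis mult.assoc)
  have f4: "x*b*x = x*x2*b" using h3 by (metis mult.assoc)
  have e2: "(b - y) * (a - x) * (b - y) = b*a*b - b*a*y - b*x*b + b*x*y - y*a*b + y*a*y + y*x*b - y*x*y"
    by (simp add: algebra_simps)
  have g1: "b*a*y = x*b*a" using h2 h6 by (metis mult.assoc)
  have g2: "b*x*b = x2 + x2*Eb*b" using h3 h8 by (simp add: mult.assoc distrib_left)
  have g3: "b*x*y = x2*y2*b" using h3 h4 by (metis mult.assoc)
  have g4: "y*a*y = y*y1*a" using h2 by (metis mult.assoc)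
  have "(a - x) * (b - y) * (a - x) - (b - y) * (a - x) * (b - y)
     = (a*b*a - y*a*b - (y1 + y1*Ea*a) + y1*x1*a - x*b*a + x*x2*b + x*y*a - x*y*x)
     - (b*a*b - x*b*a - (x2 + x2*Eb*b) + x2*y2*b - y*a*b + y*y1*a + y*x*b - y*x*y)"
    unfolding e1 e2 f1 f2 f3 f4 g1 g2 g3 g4 ..
  also have "\<dots> = a*b*a - b*a*b + ((y1*x1 + x*y) - (y1*Ea + y*y1)) * a
       + ((x*x2 + x2*Eb) - (x2*y2 + y*x)) * b + (y*x*y - x*y*x) + (x2 - y1)"
    by (simp add: algebra_simps)
  also have "\<dots> = a*b*a - b*a*b" using c3 c4 c5 c6 by simp
  finally show ?thesis .
qed

lemma diff_eq_iff: "a - b = c - d \<Longrightarrow> (a = b) \<longleftrightarrow> (c = (d::'b::ab_group_add))"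
  by (metis eq_iff_diff_eq_0)

context fw begin

abbreviation "bf i \<equiv> (\<lambda>k::nat\<Rightarrow>nat. - Cq * (if k i < k (i+1) then 1 else 0))"

lemma TWrel: assumes i: "i \<in> {1..n-1}" and gT: "G = Ti + Bprime \<iota> n r q u t i (i+1)"
  shows "(\<forall>l\<in>{1..n}. G * t l = t (swp i l) * G) \<longleftrightarrow>
    (Ti * t (i+1) = t i * Ti + Hcorr \<iota> r q u t (i+1) \<and> Ti * t i = t (i+1) * Ti - Hcorr \<iota> r q u t (i+1)
     \<and> (\<forall>l\<in>{1..n}. l \<noteq> i \<and> l \<noteq> i+1 \<longrightarrow> Ti * t l = t l * Ti))"
proof -
  have G: "G = Ti + D (bf i)" using gT Bprime_D by simp
  have key: "G * t l - t (swp i l) * G = (Ti * t l - t (swp i l) * Ti)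
      + D (\<lambda>k. bf i k * (u (k l) - u (k (swp i l))))" if l: "l \<in> {1..n}" for l
  proof -
    have l': "swp i l \<in> {1..n}" by (rule swp_range[OF i l])
    have e1: "D (bf i) * t l = D (\<lambda>k. bf i k * u (k l))" by (simp only: t_D[OF l] D_mult)
    have e2: "t (swp i l) * D (bf i) = D (\<lambda>k. bf i k * u (k (swp i l)))"
      by (simp only: t_D[OF l'] D_mult mult.commute)
    have e3: "D (\<lambda>k. bf i k * (u (k l) - u (k (swp i l)))) = D (\<lambda>k. bf i k * u (k l)) - D (\<lambda>k. bf i k * u (k (swp i l)))"
      by (simp only: D_diff[symmetric] right_diff_distrib)
    have "G * t l - t (swp i l) * G = (Ti * t l - t (swp i l) * Ti) + (D (bf i) * t l - t (swp i l) * D (bf i))"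
      unfolding G by (simp add: algebra_simps)
    then show ?thesis unfolding e1 e2 e3 .
  qed
  have j: "i + 1 \<in> {2..n}" using i by auto
  have Hc: "Hcorr \<iota> r q u t (i+1) = D (\<lambda>k. Cq * (if k i < k (i+1) then u (k (i+1)) - u (k i) else 0))"
    using Hcorr_D[OF j] by (simp cong: if_cong)
  have li: "i \<in> {1..n}" and li1: "i+1 \<in> {1..n}" using i by auto
  have sw1: "swp i i = i+1" "swp i (i+1) = i" by (auto simp: swp_def)
  have A: "G * t (i+1) = t i * G \<longleftrightarrow> Ti * t (i+1) = t i * Ti + Hcorr \<iota> r q u t (i+1)"
  proof -
    have d: "D (\<lambda>k. bf i k * (u (k (i+1)) - u (k i))) = - Hcorr \<iota> r q u t (i+1)"
      unfolding Hc D_minus[symmetric] by (rule D_cong) (simp add: algebra_simps)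
    have "G * t (i+1) - t i * G = (Ti * t (i+1) - t i * Ti) + - Hcorr \<iota> r q u t (i+1)"
      using key[OF li1] unfolding sw1 d .
    moreover have "(Ti * t (i+1) - t i * Ti) + - Hcorr \<iota> r q u t (i+1) = Ti * t (i+1) - (t i * Ti + Hcorr \<iota> r q u t (i+1))"
      by (simp add: algebra_simps)
    ultimately show ?thesis by (intro diff_eq_iff) simp
  qed
  have B: "G * t i = t (i+1) * G \<longleftrightarrow> Ti * t i = t (i+1) * Ti - Hcorr \<iota> r q u t (i+1)"
  proof -
    have d: "D (\<lambda>k. bf i k * (u (k i) - u (k (i+1)))) = Hcorr \<iota> r q u t (i+1)"
      unfolding Hc by (rule D_cong) (simp add: algebra_simps)
    have "G * t i - t (i+1) * G = (Ti * t i - t (i+1) * Ti) + Hcorr \<iota> r q u t (i+1)"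
      using key[OF li] unfolding sw1 d .
    moreover have "(Ti * t i - t (i+1) * Ti) + Hcorr \<iota> r q u t (i+1) = Ti * t i - (t (i+1) * Ti - Hcorr \<iota> r q u t (i+1))"
      by (simp add: algebra_simps)
    ultimately show ?thesis by (intro diff_eq_iff) simp
  qed
  have C: "G * t l = t l * G \<longleftrightarrow> Ti * t l = t l * Ti" if l: "l \<in> {1..n}" "l \<noteq> i" "l \<noteq> i+1" for l
  proof -
    have sw: "swp i l = l" using l by (simp add: swp_def)
    have d: "D (\<lambda>k. bf i k * (u (k l) - u (k l))) = 0" by (simp add: D_0)
    have "G * t l - t l * G = (Ti * t l - t l * Ti) + 0"
      using key[OF l(1)] unfolding sw d .
    then show ?thesis by (intro diff_eq_iff) simp
  qed
  show ?thesis
  proof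
    assume H: "\<forall>l\<in>{1..n}. G * t l = t (swp i l) * G"
    show "Ti * t (i+1) = t i * Ti + Hcorr \<iota> r q u t (i+1) \<and> Ti * t i = t (i+1) * Ti - Hcorr \<iota> r q u t (i+1)
     \<and> (\<forall>l\<in>{1..n}. l \<noteq> i \<and> l \<noteq> i+1 \<longrightarrow> Ti * t l = t l * Ti)"
    proof (intro conjI ballI impI)
      show "Ti * t (i+1) = t i * Ti + Hcorr \<iota> r q u t (i+1)" using A H li1 sw1 by auto
      show "Ti * t i = t (i+1) * Ti - Hcorr \<iota> r q u t (i+1)" using B H li sw1 by auto
      fix l assume l: "l \<in> {1..n}" and ne: "l \<noteq> i \<and> l \<noteq> i+1"
      have "swp i l = l" using ne by (simp add: swp_def)
      then show "Ti * t l = t l * Ti" using C[OF l] ne H l by auto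
    qed
  next
    assume H: "Ti * t (i+1) = t i * Ti + Hcorr \<iota> r q u t (i+1) \<and> Ti * t i = t (i+1) * Ti - Hcorr \<iota> r q u t (i+1)
     \<and> (\<forall>l\<in>{1..n}. l \<noteq> i \<and> l \<noteq> i+1 \<longrightarrow> Ti * t l = t l * Ti)"
    show "\<forall>l\<in>{1..n}. G * t l = t (swp i l) * G"
    proof
      fix l assume l: "l \<in> {1..n}"
      show "G * t l = t (swp i l) * G"
      proof (cases "l = i")
        case True then show ?thesis using B H sw1 by simp
      next
        case False
        show ?thesis
        proof (cases "l = i+1")
          case True then show ?thesis using A H sw1 by simp
        next
          case False2: False
          then have "swp i l = l" using False by (simp add: swp_def)
          then show ?thesis using C[OF l False False2] H l False False2 by simp
        qed
      qed
    qed
  qed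
qed

end


context fw begin

lemma bfD: "Bprime \<iota> n r q u t i (i+1) = D (bf i)" by (rule Bprime_D)

lemma Quad: assumes i: "i \<in> {1..n-1}" and gT: "G = Ti + Bprime \<iota> n r q u t i (i+1)"
  and tw: "\<And>k. k \<in> K \<Longrightarrow> G * b k = b (sact i k) * G"
  shows "(Ti - \<iota> q) * (Ti + \<iota> (rinv q)) = 0 \<longleftrightarrow> G^2 = 1 + \<iota> Cq * e_idem n r b i * G"
proof -
  define B where "B = D (bf i)"
  define B' where "B' = D (\<lambda>k. bf i (sact i k))"
  have T: "Ti = G - B" using gT bfD unfolding B_def by simp
  have gB: "G * B = B' * G" unfolding B_def B'_def by (rule tw_D[OF i tw])
  have QQ: "\<iota> q * \<iota> (rinv q) = 1" using rinv_unit[OF qunit] by (metis imult i1)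
  have Q: "(G - B - \<iota> q) * (G - B + \<iota> (rinv q)) = G*G - (B' + B + (\<iota> q - \<iota> (rinv q))) * G
      + (B*B + (\<iota> q - \<iota> (rinv q))*B) - 1"
    by (rule quadid[OF gB QQ]) (simp_all add: icent)
  have X: "B' + B + (\<iota> q - \<iota> (rinv q)) = \<iota> Cq * e_idem n r b i"
  proof -
    have "B' + B + (\<iota> q - \<iota> (rinv q)) = D (\<lambda>k. bf i (sact i k) + bf i k + Cq)"
      unfolding B_def B'_def by (simp only: D_add D_const idiff)
    also have "\<dots> = D (\<lambda>k. Cq * (if k i = k (i+1) then 1 else 0))"
      by (rule D_cong) (auto simp: sact_def algebra_simps)
    also have "\<dots> = \<iota> Cq * e_idem n r b i" by (simp only: e_D D_scal)
    finally show ?thesis .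
  qed
  have Y: "B*B + (\<iota> q - \<iota> (rinv q))*B = 0"
  proof -
    have "B*B + (\<iota> q - \<iota> (rinv q))*B = D (\<lambda>k. bf i k * bf i k + Cq * bf i k)"
      unfolding B_def by (simp only: D_add D_mult D_scal idiff[symmetric])
    also have "\<dots> = D (\<lambda>k. 0)" by (rule D_cong) (auto simp: algebra_simps)
    finally show ?thesis by (simp add: D_0)
  qed
  have "(Ti - \<iota> q) * (Ti + \<iota> (rinv q)) - 0 = G^2 - (1 + \<iota> Cq * e_idem n r b i * G)"
    unfolding T Q X Y by (simp add: power2_eq_square algebra_simps)
  then show ?thesis by (rule diff_eq_iff)
qed

lemma Far: assumes i: "i \<in> {1..n-1}" and j: "j \<in> {1..n-1}" and far: "i + 2 \<le> j \<or> j + 2 \<le> i"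
  and gTi: "Gi = Ti + Bprime \<iota> n r q u t i (i+1)" and gTj: "Gj = Tj + Bprime \<iota> n r q u t j (j+1)"
  and twi: "\<And>k. k \<in> K \<Longrightarrow> Gi * b k = b (sact i k) * Gi"
  and twj: "\<And>k. k \<in> K \<Longrightarrow> Gj * b k = b (sact j k) * Gj"
  shows "Ti * Tj = Tj * Ti \<longleftrightarrow> Gi * Gj = Gj * Gi"
proof -
  have e1: "D (\<lambda>k. bf j (sact i k)) = D (bf j)" by (rule D_cong) (use far in \<open>auto simp: sact_def\<close>)
  have e2: "D (\<lambda>k. bf i (sact j k)) = D (bf i)" by (rule D_cong) (use far in \<open>auto simp: sact_def\<close>)
  have c1: "Gi * D (bf j) = D (bf j) * Gi"
    using tw_D[OF i twi, of "bf j"] unfolding e1 .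
  have c2: "Gj * D (bf i) = D (bf i) * Gj"
    using tw_D[OF j twj, of "bf i"] unfolding e2 .
  have "(Gi - D (bf i)) * (Gj - D (bf j)) - (Gj - D (bf j)) * (Gi - D (bf i)) = Gi * Gj - Gj * Gi"
    by (rule farid[OF c1 c2 D_comm])
  moreover have "Ti = Gi - D (bf i)" "Tj = Gj - D (bf j)" using gTi gTj bfD by simp_all
  ultimately show ?thesis by (intro diff_eq_iff) simp
qed

lemma Braid: assumes i: "i \<in> {1..n-2}"
  and gTa: "Ga = Ta + Bprime \<iota> n r q u t i (i+1)" and gTb: "Gb = Tb + Bprime \<iota> n r q u t (i+1) (i+2)"
  and twa: "\<And>k. k \<in> K \<Longrightarrow> Ga * b k = b (sact i k) * Ga"
  and twb: "\<And>k. k \<in> K \<Longrightarrow> Gb * b k = b (sact (i+1) k) * Gb"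
  and qa: "Ga^2 = 1 + \<iota> Cq * e_idem n r b i * Ga"
  and qb: "Gb^2 = 1 + \<iota> Cq * e_idem n r b (i+1) * Gb"
  shows "Ta * Tb * Ta = Tb * Ta * Tb \<longleftrightarrow> Ga * Gb * Ga = Gb * Ga * Gb"
proof -
  have ia: "i \<in> {1..n-1}" and ib: "i+1 \<in> {1..n-1}" using i by auto
  define x where "x = D (bf i)"
  define y where "y = D (bf (i+1))"
  define x1 where "x1 = D (\<lambda>k. bf i (sact i k))"
  define y1 where "y1 = D (\<lambda>k. bf (i+1) (sact i k))"
  define x2 where "x2 = D (\<lambda>k. bf i (sact (i+1) k))"
  define y2 where "y2 = D (\<lambda>k. bf (i+1) (sact (i+1) k))"
  define Ea where "Ea = \<iota> Cq * e_idem n r b i"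
  define Eb where "Eb = \<iota> Cq * e_idem n r b (i+1)"
  have Ta: "Ta = Ga - x" using gTa bfD unfolding x_def by simp
  have Tb: "Tb = Gb - y" using gTb bfD[of "i+1"] unfolding y_def by (simp add: numeral_2_eq_2)
  have h1: "Ga * x = x1 * Ga" unfolding x_def x1_def by (rule tw_D[OF ia twa])
  have h2: "Ga * y = y1 * Ga" unfolding y_def y1_def by (rule tw_D[OF ia twa])
  have h3: "Gb * x = x2 * Gb" unfolding x_def x2_def by (rule tw_D[OF ib twb])
  have h4: "Gb * y = y2 * Gb" unfolding y_def y2_def by (rule tw_D[OF ib twb])
  have h5: "Ga * x2 = y * Ga"
  proof -
    have "Ga * x2 = D (\<lambda>k. bf i (sact (i+1) (sact i k))) * Ga" unfolding x2_def by (rule tw_D[OF ia twa])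
    also have "D (\<lambda>k. bf i (sact (i+1) (sact i k))) = y" unfolding y_def by (rule D_cong) (simp add: sact_def)
    finally show ?thesis .
  qed
  have h6: "Gb * y1 = x * Gb"
  proof -
    have "Gb * y1 = D (\<lambda>k. bf (i+1) (sact i (sact (i+1) k))) * Gb" unfolding y1_def by (rule tw_D[OF ib twb])
    also have "D (\<lambda>k. bf (i+1) (sact i (sact (i+1) k))) = x" unfolding x_def by (rule D_cong) (simp add: sact_def)
    finally show ?thesis .
  qed
  have h7: "Ga * Ga = 1 + Ea * Ga" using qa unfolding Ea_def by (simp add: power2_eq_square)
  have h8: "Gb * Gb = 1 + Eb * Gb" using qb unfolding Eb_def by (simp add: power2_eq_square)
  have EaD: "Ea = D (\<lambda>k. Cq * (if k i = k (i+1) then 1 else 0))" unfolding Ea_def by (simp only: e_D D_scal)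
  have EbD: "Eb = D (\<lambda>k. Cq * (if k (i+1) = k (i+1+1) then 1 else 0))" unfolding Eb_def by (simp only: e_D D_scal)
  have c3: "y1 = x2" unfolding y1_def x2_def by (rule D_cong) (simp add: sact_def)
  have c4: "y1 * x1 + x * y = y1 * Ea + y * y1"
    unfolding y1_def x1_def x_def y_def EaD D_mult D_add[symmetric]
    by (rule D_cong) (auto simp: sact_def algebra_simps)
  have c5: "x * x2 + x2 * Eb = x2 * y2 + y * x"
    unfolding x2_def y2_def x_def y_def EbD D_mult D_add[symmetric]
    by (rule D_cong) (auto simp: sact_def algebra_simps)
  have c6: "x * y * x = y * x * y"
    unfolding x_def y_def D_mult
    by (rule D_cong) (auto simp: sact_def algebra_simps)
  have "(Ga - x) * (Gb - y) * (Ga - x) - (Gb - y) * (Ga - x) * (Gb - y) = Ga * Gb * Ga - Gb * Ga * Gb"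
    by (rule braid_gen[OF h1 h2 h3 h4 h5 h6 h7 h8 c3 c4 c5 c6])
  then show ?thesis unfolding Ta Tb by (rule diff_eq_iff)
qed

end


lemma comm_prod: "(\<And>x. x \<in> set xs \<Longrightarrow> f x * z = z * f x) \<Longrightarrow>
    prod_list (map f xs) * z = z * prod_list (map f xs :: 'b::monoid_mult list)"
proof (induction xs)
  case Nil then show ?case by simp
next
  case (Cons a xs)
  have "f a * prod_list (map f xs) * z = f a * (z * prod_list (map f xs))" using Cons by (simp add: mult.assoc)
  also have "\<dots> = z * (f a * prod_list (map f xs))" using Cons.prems by (simp add: mult.assoc[symmetric])
  finally show ?case by simp
qed

lemma prod_mult_comm: "(\<And>x y. x \<in> set xs \<Longrightarrow> y \<in> set xs \<Longrightarrow> f x * g y = g y * f x) \<Longrightarrow>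
    prod_list (map f xs) * prod_list (map g xs) = prod_list (map (\<lambda>x. f x * g x) xs :: 'b::monoid_mult list)"
proof (induction xs)
  case Nil then show ?case by simp
next
  case (Cons a xs)
  have c: "prod_list (map f xs) * g a = g a * prod_list (map f xs)"
    by (rule comm_prod) (use Cons.prems in auto)
  have "prod_list (map f (a # xs)) * prod_list (map g (a # xs)) = f a * (prod_list (map f xs) * g a) * prod_list (map g xs)"
    by (simp add: mult.assoc)
  also have "\<dots> = (f a * g a) * (prod_list (map f xs) * prod_list (map g xs))" unfolding c by (simp add: mult.assoc)
  also have "\<dots> = (f a * g a) * prod_list (map (\<lambda>x. f x * g x) xs)" using Cons by simp
  finally show ?case by simp
qed

lemma prod_scal: "l \<in> set xs \<Longrightarrow> (\<And>x. x \<in> set xs \<Longrightarrow> z * f x = f x * z) \<Longrightarrow> z * f l = c * f l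
   \<Longrightarrow> (\<And>w. c * w = w * c) \<Longrightarrow> z * prod_list (map f xs) = c * prod_list (map f xs :: 'b::monoid_mult list)"
proof (induction xs)
  case Nil then show ?case by simp
next
  case (Cons a xs)
  show ?case
  proof (cases "a = l")
    case True
    then show ?thesis using Cons.prems by (simp add: mult.assoc[symmetric])
  next
    case False
    then have "l \<in> set xs" using Cons.prems by simp
    then have IH: "z * prod_list (map f xs) = c * prod_list (map f xs)" using Cons by simp
    have "z * prod_list (map f (a # xs)) = f a * (z * prod_list (map f xs))"
      using Cons.prems(2)[of a] by (simp add: mult.assoc[symmetric])
    also have "\<dots> = c * prod_list (map f (a # xs))" unfolding IH using Cons.prems(4)[of "f a"]
      by (simp add: mult.assoc[symmetric])
    finally show ?thesis .
  qed
qed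

locale hside = ralg \<iota> + udata r u
  for \<iota> :: "'a::idom \<Rightarrow> 'b::ring_1" and r u +
  fixes n :: nat and t :: "nat \<Rightarrow> 'b"
  assumes n1: "n \<ge> 1" and r1: "r \<ge> 1"
    and Hp: "\<And>l. l \<in> {1..n} \<Longrightarrow> prod_list (map (\<lambda>c. t l - \<iota> (u c)) [1..<r+1]) = 0"
    and Hc: "\<And>l l'. l \<in> {1..n} \<Longrightarrow> l' \<in> {1..n} \<Longrightarrow> t l * t l' = t l' * t l"
begin

definition E where "E l c = polyA \<iota> (Lag r u c) (t l)"

lemma E_eq: "E l c = prod_list (map (\<lambda>m. (t l - \<iota> (u m)) * \<iota> (rinv (u c - u m))) (filter (\<lambda>m. m \<noteq> c) [1..<r+1]))"
proof -
  have f: "polyA \<iota> ([:-a, 1:] * [:c':]) x = (x - \<iota> a) * \<iota> c'" for a c' x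
    unfolding polyA_mult polyA_lin polyA_const by simp
  show ?thesis unfolding E_def Lag_def polyA_prod_list f ..
qed

lemma bprod_E: "bprod \<iota> n r u t k = prod_list (map (\<lambda>l. E l (k l)) [1..<n+1])"
  unfolding bprod_def E_eq ..

lemma modP: assumes l: "l \<in> {1..n}" and f: "\<forall>c\<in>{1..r}. poly f (u c) = 0"
  shows "polyA \<iota> f (t l) = 0"
proof -
  obtain h where h: "f = Ppol r u * h" using Ppol_dvd[OF f] by (auto elim: dvdE)
  have "polyA \<iota> (Ppol r u) (t l) = prod_list (map (\<lambda>c. t l - \<iota> (u c)) [1..<r+1])"
    unfolding Ppol_def polyA_prod_list by (simp add: algebra_simps)
  also have "\<dots> = 0" by (rule Hp[OF l])
  finally show ?thesis unfolding h polyA_mult by simp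
qed

lemma E_comm_t: "l \<in> {1..n} \<Longrightarrow> l' \<in> {1..n} \<Longrightarrow> E l c * t l' = t l' * E l c"
  unfolding E_def by (rule polyA_comm) (rule Hc)

lemma E_comm: "l \<in> {1..n} \<Longrightarrow> l' \<in> {1..n} \<Longrightarrow> E l c * E l' c' = E l' c' * E l c"
  unfolding E_def[of l' c'] by (rule polyA_comm[symmetric]) (rule E_comm_t[symmetric])

lemma E_orth: assumes l: "l \<in> {1..n}" and c: "c \<in> {1..r}" and c': "c' \<in> {1..r}"
  shows "E l c * E l c' = (if c = c' then E l c else 0)"
proof -
  have "polyA \<iota> (Lag r u c * Lag r u c' - (if c = c' then Lag r u c else 0)) (t l) = 0"
    by (rule modP[OF l]) (use c c' poly_Lag in auto)
  then show ?thesis unfolding E_def polyA_diff polyA_mult by (auto split: if_splits)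
qed

lemma E_sum: assumes l: "l \<in> {1..n}" shows "(\<Sum>c\<in>{1..r}. E l c) = 1"
proof -
  have "polyA \<iota> ((\<Sum>c\<in>{1..r}. Lag r u c) - 1) (t l) = 0"
  proof (rule modP[OF l], intro ballI)
    fix m assume m: "m \<in> {1..r}"
    have "(\<Sum>c\<in>{1..r}. poly (Lag r u c) (u m)) = (\<Sum>c\<in>{1..r}. if m = c then 1 else 0)"
      by (rule sum.cong) (use m poly_Lag in auto)
    then show "poly ((\<Sum>c\<in>{1..r}. Lag r u c) - 1) (u m) = 0" using m by (simp add: poly_sum)
  qed
  then show ?thesis unfolding E_def polyA_diff polyA_sum by simp
qed

lemma E_t: assumes l: "l \<in> {1..n}" and c: "c \<in> {1..r}" shows "t l * E l c = \<iota> (u c) * E l c"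
proof -
  have "polyA \<iota> ([:0, 1:] * Lag r u c - [:u c:] * Lag r u c) (t l) = 0"
    by (rule modP[OF l]) (use c poly_Lag in auto)
  then show ?thesis unfolding E_def polyA_diff polyA_mult polyA_X polyA_const by simp
qed

lemma orthH: assumes k: "k \<in> Kset n r" and k': "k' \<in> Kset n r"
  shows "bprod \<iota> n r u t k * bprod \<iota> n r u t k' = (if k = k' then bprod \<iota> n r u t k else 0)"
proof -
  have "bprod \<iota> n r u t k * bprod \<iota> n r u t k' = prod_list (map (\<lambda>l. E l (k l) * E l (k' l)) [1..<n+1])"
    unfolding bprod_E by (rule prod_mult_comm) (auto intro: E_comm)
  also have "\<dots> = prod_list (map (\<lambda>l. if k l = k' l then E l (k l) else 0) [1..<n+1])"
  proof (rule arg_cong[where f=prod_list], rule map_cong[OF refl])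
    fix l assume "l \<in> set [1..<n+1]"
    then have l: "l \<in> {1..n}" by auto
    then have "k l \<in> {1..r}" "k' l \<in> {1..r}" using k k' unfolding Kset_iff by blast+
    then show "E l (k l) * E l (k' l) = (if k l = k' l then E l (k l) else 0)" using E_orth[OF l] by simp
  qed
  also have "\<dots> = (if k = k' then bprod \<iota> n r u t k else 0)"
  proof (cases "k = k'")
    case True then show ?thesis unfolding bprod_E by simp
  next
    case False
    from False Kset_eq[OF k k'] obtain l where l: "l \<in> {1..n}" "k l \<noteq> k' l" by blast
    have "prod_list (map (\<lambda>l. if k l = k' l then E l (k l) else 0) [1..<n+1]) = 0"
      by (rule prod_list_zero[of l]) (use l in auto)
    then show ?thesis using False by simp
  qed
  finally show ?thesis .
qed

lemma sumH_gen: "m \<le> n \<Longrightarrow> (\<Sum>k\<in>PiE {1..m} (\<lambda>_. {1..r}). prod_list (map (\<lambda>l. E l (k l)) [1..<m+1])) = 1"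
proof (induction m)
  case 0 then show ?case by simp
next
  case (Suc m)
  have ins: "{1..Suc m} = insert (Suc m) {1..m}" by auto
  have nin: "Suc m \<notin> {1..m}" by simp
  let ?P = "PiE {1..m} (\<lambda>_. {1..r})"
  have "(\<Sum>k\<in>PiE {1..Suc m} (\<lambda>_. {1..r}). prod_list (map (\<lambda>l. E l (k l)) [1..<Suc m+1]))
     = (\<Sum>(y,g)\<in>{1..r} \<times> ?P. prod_list (map (\<lambda>l. E l ((g(Suc m := y)) l)) [1..<Suc m+1]))"
    unfolding ins PiE_insert_eq
    by (subst sum.reindex[OF inj_combinator[OF nin]]) (simp add: case_prod_beta)
  also have "\<dots> = (\<Sum>(y,g)\<in>{1..r} \<times> ?P. prod_list (map (\<lambda>l. E l (g l)) [1..<m+1]) * E (Suc m) y)"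
  proof (rule sum.cong[OF refl], clarify)
    fix y g
    have "[1..<Suc m+1] = [1..<m+1] @ [Suc m]" by (simp add: upt_Suc)
    moreover have "map (\<lambda>l. E l ((g(Suc m := y)) l)) [1..<m+1] = map (\<lambda>l. E l (g l)) [1..<m+1]"
      by (rule map_cong) auto
    ultimately show "prod_list (map (\<lambda>l. E l ((g(Suc m := y)) l)) [1..<Suc m+1])
        = prod_list (map (\<lambda>l. E l (g l)) [1..<m+1]) * E (Suc m) y"
      by (simp only: map_append prod_list.append list.map prod_list.Cons prod_list.Nil mult_1_right fun_upd_same)
  qed
  also have "\<dots> = (\<Sum>g\<in>?P. prod_list (map (\<lambda>l. E l (g l)) [1..<m+1]) * (\<Sum>y\<in>{1..r}. E (Suc m) y))"
    by (simp add: sum.cartesian_product[symmetric] sum_distrib_left) (rule sum.swap)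
  also have "\<dots> = 1" using E_sum[of "Suc m"] Suc by simp
  finally show ?case .
qed

lemma sumH: "(\<Sum>k\<in>Kset n r. bprod \<iota> n r u t k) = 1"
  unfolding Kset_def bprod_E using sumH_gen[of n] by simp

lemma tDH: assumes l: "l \<in> {1..n}" shows "t l = (\<Sum>k\<in>Kset n r. \<iota> (u (k l)) * bprod \<iota> n r u t k)"
proof -
  have "t l = t l * (\<Sum>k\<in>Kset n r. bprod \<iota> n r u t k)" using sumH by simp
  also have "\<dots> = (\<Sum>k\<in>Kset n r. t l * bprod \<iota> n r u t k)" by (simp add: sum_distrib_left)
  also have "\<dots> = (\<Sum>k\<in>Kset n r. \<iota> (u (k l)) * bprod \<iota> n r u t k)"
  proof (rule sum.cong[OF refl])
    fix k assume k: "k \<in> Kset n r"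
    have kl: "k l \<in> {1..r}" using k l unfolding Kset_iff by blast
    show "t l * bprod \<iota> n r u t k = \<iota> (u (k l)) * bprod \<iota> n r u t k"
      unfolding bprod_E
    proof (rule prod_scal)
      show "l \<in> set [1..<n+1]" using l by auto
      show "t l * E x (k x) = E x (k x) * t l" if "x \<in> set [1..<n+1]" for x
        using E_comm_t[of x l] that l by auto
      show "t l * E l (k l) = \<iota> (u (k l)) * E l (k l)" by (rule E_t[OF l kl])
      show "\<iota> (u (k l)) * w = w * \<iota> (u (k l))" for w by (rule icent)
    qed
  qed
  finally show ?thesis .
qed

end


lemma shift_q: "(\<forall>j\<in>{2..(n::nat)}. Q (j-1) j) \<longleftrightarrow> (\<forall>i\<in>{1..n-1}. Q i (i+1))"
proof
  assume H: "\<forall>j\<in>{2..n}. Q (j-1) j"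
  show "\<forall>i\<in>{1..n-1}. Q i (i+1)"
  proof
    fix i assume "i \<in> {1..n-1}"
    then have "i+1 \<in> {2..n}" by auto
    then show "Q i (i+1)" using H by fastforce
  qed
next
  assume H: "\<forall>i\<in>{1..n-1}. Q i (i+1)"
  show "\<forall>j\<in>{2..n}. Q (j-1) j"
  proof
    fix j assume j: "j \<in> {2..n}"
    then have "j-1 \<in> {1..n-1}" "j - 1 + 1 = j" by auto
    then show "Q (j-1) j" using H by metis
  qed
qed

context fw begin

lemma Hb2: "\<forall>i\<in>{1..n}. prod_list (map (\<lambda>c. t i - \<iota> (u c)) [1..<r+1]) = 0"
proof
  fix i assume i: "i \<in> {1..n}"
  have "prod_list (map (\<lambda>c. t i - \<iota> (u c)) [1..<r+1]) = prod_list (map (\<lambda>c. D (\<lambda>k. u (k i) - u c)) [1..<r+1])"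
    using t_D[OF i] by (simp add: D_diff D_const)
  also have "\<dots> = D (\<lambda>k. prod_list (map (\<lambda>c. u (k i) - u c) [1..<r+1]))" by (rule D_prod_list)
  also have "\<dots> = D (\<lambda>k. 0)"
  proof (rule D_cong)
    fix k assume "k \<in> K"
    then have "k i \<in> {1..r}" using i unfolding Kset_iff by blast
    then show "prod_list (map (\<lambda>c. u (k i) - u c) [1..<r+1]) = 0" by (intro prod_list_zero[of "k i"]) auto
  qed
  finally show "prod_list (map (\<lambda>c. t i - \<iota> (u c)) [1..<r+1]) = 0" by (simp add: D_0)
qed

lemma Hb5: "\<forall>i\<in>{1..n}. \<forall>j\<in>{1..n}. t i * t j = t j * t i"
proof (intro ballI)
  fix i j assume "i \<in> {1..n}" "j \<in> {1..n}"
  show "t i * t j = t j * t i" unfolding t_D[OF \<open>i \<in> {1..n}\<close>] t_D[OF \<open>j \<in> {1..n}\<close>] by (rule D_comm)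
qed

lemma TWi: assumes i: "i \<in> {1..n-1}" and gT: "G = Ti + Bprime \<iota> n r q u t i (i+1)"
  shows "(\<forall>k\<in>K. G * b k = b (sact i k) * G) \<longleftrightarrow>
    (Ti * t (i+1) = t i * Ti + Hcorr \<iota> r q u t (i+1) \<and> Ti * t i = t (i+1) * Ti - Hcorr \<iota> r q u t (i+1)
     \<and> (\<forall>l\<in>{1..n}. l \<noteq> i \<and> l \<noteq> i+1 \<longrightarrow> Ti * t l = t l * Ti))"
proof -
  have "(\<forall>k\<in>K. G * b k = b (sact i k) * G) \<longleftrightarrow> (\<forall>l\<in>{1..n}. G * t l = t (swp i l) * G)"
    using tw_fwd[OF i] tw_back[OF i] by blast
  also have "\<dots> \<longleftrightarrow> (Ti * t (i+1) = t i * Ti + Hcorr \<iota> r q u t (i+1) \<and> Ti * t i = t (i+1) * Ti - Hcorr \<iota> r q u t (i+1)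
     \<and> (\<forall>l\<in>{1..n}. l \<noteq> i \<and> l \<noteq> i+1 \<longrightarrow> Ti * t l = t l * Ti))" by (rule TWrel[OF i gT])
  finally show ?thesis .
qed

lemma rels_equiv: assumes hg: "\<And>i. i \<in> {1..n-1} \<Longrightarrow> g i = T i + Bprime \<iota> n r q u t i (i+1)"
  shows "H_rels \<iota> n r q u t T \<longleftrightarrow> G_rels \<iota> n r q g b"
proof -
  let ?I = "{1..n-1}"
  let ?A = "\<lambda>i. \<forall>k\<in>K. g i * b k = b (sact i k) * g i"
  let ?P7 = "\<lambda>i. T i * t (i+1) = t i * T i + Hcorr \<iota> r q u t (i+1)"
  let ?P8 = "\<lambda>i. T i * t i = t (i+1) * T i - Hcorr \<iota> r q u t (i+1)"
  let ?P6 = "\<lambda>i. \<forall>l\<in>{1..n}. l \<noteq> i \<and> l \<noteq> i+1 \<longrightarrow> T i * t l = t l * T i"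
  have eqi: "?A i \<longleftrightarrow> ?P7 i \<and> ?P8 i \<and> ?P6 i" if i: "i \<in> ?I" for i
    by (rule TWi[OF i hg[OF i]])
  have s7: "(\<forall>j\<in>{2..n}. T (j-1) * t j = t (j-1) * T (j-1) + Hcorr \<iota> r q u t j) \<longleftrightarrow> (\<forall>i\<in>?I. ?P7 i)"
    by (rule shift_q[of n "\<lambda>a b. T a * t b = t a * T a + Hcorr \<iota> r q u t b"])
  have s8: "(\<forall>j\<in>{2..n}. T (j-1) * t (j-1) = t j * T (j-1) - Hcorr \<iota> r q u t j) \<longleftrightarrow> (\<forall>i\<in>?I. ?P8 i)"
    by (rule shift_q[of n "\<lambda>a b. T a * t a = t b * T a - Hcorr \<iota> r q u t b"])
  have TW1: "(\<forall>i\<in>?I. ?A i) \<Longrightarrow> (\<forall>i\<in>?I. ?P7 i) \<and> (\<forall>i\<in>?I. ?P8 i) \<and> (\<forall>i\<in>?I. ?P6 i)"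
    using eqi by blast
  have TW2: "(\<forall>i\<in>?I. ?P7 i) \<Longrightarrow> (\<forall>i\<in>?I. ?P8 i) \<Longrightarrow> (\<forall>i\<in>?I. ?P6 i) \<Longrightarrow> (\<forall>i\<in>?I. ?A i)"
    using eqi by blast
  have Q: "(T i - \<iota> q) * (T i + \<iota> (rinv q)) = 0 \<longleftrightarrow> g i ^ 2 = 1 + \<iota> Cq * e_idem n r b i * g i"
    if i: "i \<in> ?I" and a: "?A i" for i
    by (rule Quad[OF i hg[OF i]]) (use a in blast)
  have F: "T i * T j = T j * T i \<longleftrightarrow> g i * g j = g j * g i"
    if i: "i \<in> ?I" and j: "j \<in> ?I" and far: "i + 2 \<le> j \<or> j + 2 \<le> i" and a: "?A i" and aj: "?A j" for i j
    by (rule Far[OF i j far hg[OF i] hg[OF j]]) (use a aj in blast)+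
  have Br: "T i * T (i+1) * T i = T (i+1) * T i * T (i+1) \<longleftrightarrow> g i * g (i+1) * g i = g (i+1) * g i * g (i+1)"
    if i: "i \<in> {1..n-2}" and a: "?A i" and bb: "?A (i+1)"
      and qa: "g i ^ 2 = 1 + \<iota> Cq * e_idem n r b i * g i"
      and qb: "g (i+1) ^ 2 = 1 + \<iota> Cq * e_idem n r b (i+1) * g (i+1)" for i
  proof -
    have ia: "i \<in> ?I" and ib: "i+1 \<in> ?I" using i by auto
    have gb: "g (i+1) = T (i+1) + Bprime \<iota> n r q u t (i+1) (i+2)"
      using hg[OF ib] by (simp add: numeral_2_eq_2)
    show ?thesis
      by (rule Braid[OF i hg[OF ia] gb _ _ qa qb]) (use a bb in blast)+
  qed
  have ab: "i \<in> {1..n-2} \<Longrightarrow> i \<in> ?I \<and> i + 1 \<in> ?I" for i by auto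
  show ?thesis
  proof
    assume H: "H_rels \<iota> n r q u t T"
    note Hd = H[unfolded H_rels_def]
    have H1: "\<forall>i\<in>?I. (T i - \<iota> q) * (T i + \<iota> (rinv q)) = 0" using Hd by (elim conjE)
    have H3: "\<forall>i\<in>{1..n-2}. T i * T (i+1) * T i = T (i+1) * T i * T (i+1)" using Hd by (elim conjE)
    have H4: "\<forall>i\<in>?I. \<forall>j\<in>?I. (i + 2 \<le> j \<or> j + 2 \<le> i) \<longrightarrow> T i * T j = T j * T i" using Hd by (elim conjE)
    have H6: "\<forall>i\<in>?I. ?P6 i" using Hd by (elim conjE)
    have H7: "\<forall>i\<in>?I. ?P7 i" using Hd s7 by (elim conjE) blast
    have H8: "\<forall>i\<in>?I. ?P8 i" using Hd s8 by (elim conjE) blast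
    have tw: "\<forall>i\<in>?I. ?A i" by (rule TW2[OF H7 H8 H6])
    have g3: "\<forall>i\<in>?I. g i ^ 2 = 1 + \<iota> Cq * e_idem n r b i * g i"
    proof
      fix i assume i: "i \<in> ?I"
      show "g i ^ 2 = 1 + \<iota> Cq * e_idem n r b i * g i" using Q[OF i] tw H1 i by blast
    qed
    have g1: "\<forall>i\<in>?I. \<forall>j\<in>?I. (i + 2 \<le> j \<or> j + 2 \<le> i) \<longrightarrow> g i * g j = g j * g i"
    proof (intro ballI impI)
      fix i j assume i: "i \<in> ?I" and j: "j \<in> ?I" and far: "i + 2 \<le> j \<or> j + 2 \<le> i"
      have "T i * T j = T j * T i" using H4 i j far by blast
      then show "g i * g j = g j * g i" using F[OF i j far] tw i j by blast
    qed
    have g2: "\<forall>i\<in>{1..n-2}. g i * g (i+1) * g i = g (i+1) * g i * g (i+1)"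
    proof
      fix i assume i: "i \<in> {1..n-2}"
      have ia: "i \<in> ?I" and ib: "i+1 \<in> ?I" using ab[OF i] by auto
      have "T i * T (i+1) * T i = T (i+1) * T i * T (i+1)" using H3 i by blast
      moreover have "?A i" "?A (i+1)" using tw ia ib by blast+
      moreover have "g i ^ 2 = 1 + \<iota> Cq * e_idem n r b i * g i" using g3 ia by blast
      moreover have "g (i+1) ^ 2 = 1 + \<iota> Cq * e_idem n r b (i+1) * g (i+1)" using g3 ib by blast
      ultimately show "g i * g (i+1) * g i = g (i+1) * g i * g (i+1)" using Br[OF i] by blast
    qed
    have G4: "\<forall>k\<in>K. \<forall>k'\<in>K. b k * b k' = (if k = k' then b k else 0)" using orth by blast
    show "G_rels \<iota> n r q g b" unfolding G_rels_def
      by (intro conjI g1 g2 g3 G4 tw sum1)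
  next
    assume G: "G_rels \<iota> n r q g b"
    note Gd = G[unfolded G_rels_def]
    have g1: "\<forall>i\<in>?I. \<forall>j\<in>?I. (i + 2 \<le> j \<or> j + 2 \<le> i) \<longrightarrow> g i * g j = g j * g i" using Gd by (elim conjE)
    have g2: "\<forall>i\<in>{1..n-2}. g i * g (i+1) * g i = g (i+1) * g i * g (i+1)" using Gd by (elim conjE)
    have g3: "\<forall>i\<in>?I. g i ^ 2 = 1 + \<iota> Cq * e_idem n r b i * g i" using Gd by (elim conjE)
    have tw: "\<forall>i\<in>?I. ?A i" using Gd by (elim conjE)
    have T3: "(\<forall>i\<in>?I. ?P7 i) \<and> (\<forall>i\<in>?I. ?P8 i) \<and> (\<forall>i\<in>?I. ?P6 i)" by (rule TW1[OF tw])
    have h1: "\<forall>i\<in>?I. (T i - \<iota> q) * (T i + \<iota> (rinv q)) = 0"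
    proof
      fix i assume i: "i \<in> ?I"
      show "(T i - \<iota> q) * (T i + \<iota> (rinv q)) = 0" using Q[OF i] tw g3 i by blast
    qed
    have h4: "\<forall>i\<in>?I. \<forall>j\<in>?I. (i + 2 \<le> j \<or> j + 2 \<le> i) \<longrightarrow> T i * T j = T j * T i"
    proof (intro ballI impI)
      fix i j assume i: "i \<in> ?I" and j: "j \<in> ?I" and far: "i + 2 \<le> j \<or> j + 2 \<le> i"
      have "g i * g j = g j * g i" using g1 i j far by blast
      then show "T i * T j = T j * T i" using F[OF i j far] tw i j by blast
    qed
    have h3: "\<forall>i\<in>{1..n-2}. T i * T (i+1) * T i = T (i+1) * T i * T (i+1)"
    proof
      fix i assume i: "i \<in> {1..n-2}"
      have ia: "i \<in> ?I" and ib: "i+1 \<in> ?I" using ab[OF i] by auto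
      have "g i * g (i+1) * g i = g (i+1) * g i * g (i+1)" using g2 i by blast
      moreover have "?A i" "?A (i+1)" using tw ia ib by blast+
      moreover have "g i ^ 2 = 1 + \<iota> Cq * e_idem n r b i * g i" using g3 ia by blast
      moreover have "g (i+1) ^ 2 = 1 + \<iota> Cq * e_idem n r b (i+1) * g (i+1)" using g3 ib by blast
      ultimately show "T i * T (i+1) * T i = T (i+1) * T i * T (i+1)" using Br[OF i] by blast
    qed
    have h7: "\<forall>j\<in>{2..n}. T (j-1) * t j = t (j-1) * T (j-1) + Hcorr \<iota> r q u t j" using T3 s7 by blast
    have h8: "\<forall>j\<in>{2..n}. T (j-1) * t (j-1) = t j * T (j-1) - Hcorr \<iota> r q u t j" using T3 s8 by blast
    have h6: "\<forall>i\<in>?I. ?P6 i" using T3 by blast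
    show "H_rels \<iota> n r q u t T" unfolding H_rels_def
      by (intro conjI h1 Hb2 h3 h4 Hb5 h6 h7 h8)
  qed
qed

end


theorem theorem3p13:
  fixes \<iota> :: "'a::idom \<Rightarrow> 'b::ring_1"
    and n r :: nat and q :: 'a and u :: "nat \<Rightarrow> 'a"
  assumes "n \<ge> 1" and "r \<ge> 1"
    and "\<exists>y. q * y = 1"
    and "\<exists>y. Vdelta r u * y = 1"
    and "R_algebra \<iota>"
  shows "bij_betw (Phi \<iota> n r q u) (H_sols \<iota> n r q u) (G_sols \<iota> n r q)"
proof -
  note n1 = assms(1) and r1 = assms(2) and qu = assms(3) and Du = assms(4) and Ra = assms(5)
  interpret ralg \<iota> by unfold_locales (rule Ra)
  interpret udata r u by unfold_locales (rule Du)
  define tG where "tG = (\<lambda>b::(nat\<Rightarrow>nat)\<Rightarrow>'b. \<lambda>l. if l \<in> {1..n} then (\<Sum>k\<in>Kset n r. \<iota> (u (k l)) * b k) else 0)"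
  define Psi where "Psi = (\<lambda>(g::nat\<Rightarrow>'b, b). (tG b, \<lambda>i. if i \<in> {1..n-1} then g i - Bprime \<iota> n r q u (tG b) i (i+1) else 0))"
  define bH where "bH = (\<lambda>t k. if k \<in> Kset n r then bprod \<iota> n r u t k else 0)"
  have Hfw: "fw \<iota> r u n q (bH t) t \<and> (\<forall>l\<in>{1..n}. t l = (\<Sum>k\<in>Kset n r. \<iota> (u (k l)) * bH t k))"
    if H: "H_rels \<iota> n r q u t T" for t T
  proof -
    note Hd = H[unfolded H_rels_def]
    have Hp: "\<forall>l\<in>{1..n}. prod_list (map (\<lambda>c. t l - \<iota> (u c)) [1..<r+1]) = 0" using Hd by (elim conjE)
    have Hc: "\<forall>i\<in>{1..n}. \<forall>j\<in>{1..n}. t i * t j = t j * t i" using Hd by (elim conjE)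
    interpret hside \<iota> r u n t by unfold_locales (use n1 r1 Hp Hc in auto)
    have s: "(\<Sum>k\<in>Kset n r. \<iota> (u (k l)) * bH t k) = (\<Sum>k\<in>Kset n r. \<iota> (u (k l)) * bprod \<iota> n r u t k)" for l
      unfolding bH_def by (rule sum.cong) auto
    have tD: "\<forall>l\<in>{1..n}. t l = (\<Sum>k\<in>Kset n r. \<iota> (u (k l)) * bH t k)" using tDH s by auto
    have "fw \<iota> r u n q (bH t) t"
    proof (unfold_locales)
      show "1 \<le> n" "1 \<le> r" "\<exists>y. q * y = 1" using n1 r1 qu by auto
      show "bH t k * bH t k' = (if k = k' then bH t k else 0)" if "k \<in> Kset n r" "k' \<in> Kset n r" for k k'
        using orthH[OF that] that unfolding bH_def by simp
      show "(\<Sum>k\<in>Kset n r. bH t k) = 1" using sumH unfolding bH_def by simp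
      show "t l = (\<Sum>k\<in>Kset n r. \<iota> (u (k l)) * bH t k)" if "l \<in> {1..n}" for l using tD that by blast
    qed
    then show ?thesis using tD by blast
  qed
  have Gfw: "fw \<iota> r u n q b (tG b)" if G: "G_rels \<iota> n r q g b" for g b
  proof (unfold_locales)
    note Gd = G[unfolded G_rels_def]
    show "1 \<le> n" "1 \<le> r" "\<exists>y. q * y = 1" using n1 r1 qu by auto
    show "b k * b k' = (if k = k' then b k else 0)" if "k \<in> Kset n r" "k' \<in> Kset n r" for k k'
      using Gd that by (elim conjE) blast
    show "(\<Sum>k\<in>Kset n r. b k) = 1" using Gd by (elim conjE)
    show "tG b l = (\<Sum>k\<in>Kset n r. \<iota> (u (k l)) * b k)" if "l \<in> {1..n}" for l
      using that unfolding tG_def by simp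
  qed
  show ?thesis
  proof (rule bij_betwI[where g=Psi])
    show "Phi \<iota> n r q u \<in> H_sols \<iota> n r q u \<rightarrow> G_sols \<iota> n r q"
    proof
      fix x assume x: "x \<in> H_sols \<iota> n r q u"
      obtain t T where tT: "x = (t, T)" by (cases x)
      have H: "H_rels \<iota> n r q u t T" using x tT unfolding H_sols_def by simp
      interpret F: fw \<iota> r u n q "bH t" t using Hfw[OF H] by blast
      define g where "g = (\<lambda>i. if i \<in> {1..n-1} then T i + Bprime \<iota> n r q u t i (i+1) else 0)"
      have Ph: "Phi \<iota> n r q u x = (g, bH t)" unfolding tT Phi_def g_def bH_def by simp
      have "G_rels \<iota> n r q g (bH t)" using F.rels_equiv[of g T] H unfolding g_def by simp
      then show "Phi \<iota> n r q u x \<in> G_sols \<iota> n r q" unfolding Ph G_sols_def g_def bH_def by simp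
    qed
    show "Psi \<in> G_sols \<iota> n r q \<rightarrow> H_sols \<iota> n r q u"
    proof
      fix y assume y: "y \<in> G_sols \<iota> n r q"
      obtain g b where gb: "y = (g, b)" by (cases y)
      have G: "G_rels \<iota> n r q g b" using y gb unfolding G_sols_def by simp
      interpret F: fw \<iota> r u n q b "tG b" by (rule Gfw[OF G])
      define T where "T = (\<lambda>i. if i \<in> {1..n-1} then g i - Bprime \<iota> n r q u (tG b) i (i+1) else 0)"
      have Ps: "Psi y = (tG b, T)" unfolding gb Psi_def T_def by simp
      have "H_rels \<iota> n r q u (tG b) T" using F.rels_equiv[of g T] G unfolding T_def by simp
      then show "Psi y \<in> H_sols \<iota> n r q u" unfolding Ps H_sols_def T_def tG_def by simp
    qed
    show "Psi (Phi \<iota> n r q u x) = x" if x: "x \<in> H_sols \<iota> n r q u" for x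
    proof -
      obtain t T where tT: "x = (t, T)" by (cases x)
      have H: "H_rels \<iota> n r q u t T" and t0: "\<forall>i. i \<notin> {1..n} \<longrightarrow> t i = 0"
        and T0: "\<forall>i. i \<notin> {1..n-1} \<longrightarrow> T i = 0" using x tT unfolding H_sols_def by auto
      have tt: "tG (bH t) = t"
      proof
        fix l show "tG (bH t) l = t l" using Hfw[OF H] t0 unfolding tG_def by auto
      qed
      have Ph: "Phi \<iota> n r q u (t, T) = ((\<lambda>i. if i \<in> {1..n-1} then T i + Bprime \<iota> n r q u t i (i+1) else 0), bH t)"
        unfolding Phi_def bH_def by simp
      show ?thesis unfolding tT Ph Psi_def using T0 by (simp add: tt fun_eq_iff)
    qed
    show "Phi \<iota> n r q u (Psi y) = y" if y: "y \<in> G_sols \<iota> n r q" for y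
    proof -
      obtain g b where gb: "y = (g, b)" by (cases y)
      have G: "G_rels \<iota> n r q g b" and g0: "\<forall>i. i \<notin> {1..n-1} \<longrightarrow> g i = 0"
        and b0: "\<forall>k. k \<notin> Kset n r \<longrightarrow> b k = 0" using y gb unfolding G_sols_def by auto
      interpret F: fw \<iota> r u n q b "tG b" by (rule Gfw[OF G])
      have Ps: "Psi (g, b) = (tG b, \<lambda>i. if i \<in> {1..n-1} then g i - Bprime \<iota> n r q u (tG b) i (i+1) else 0)"
        unfolding Psi_def by simp
      have bb: "(\<lambda>k. if k \<in> Kset n r then bprod \<iota> n r u (tG b) k else 0) = b"
        using F.bprod_b b0 by (auto simp: fun_eq_iff)
      show ?thesis unfolding gb Ps Phi_def using g0 by (simp add: bb fun_eq_iff)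
    qed
  qed
qed


end
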